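(* Let $G$ be a finite simple graph containing at least one critical vertex. Let $a \geq 1$ and let $r_1, \ldots, r_a$ be positive integers with $1 + \sum_{i=1}^a r_i = \chi(G)$. Among all $(r_1, \ldots, r_a)$-partitioned colorings of $G$, choose one, $\pi = \{\{x\}, L_{11}, \ldots, L_{1r_1}, \ldots, L_{a1}, \ldots, L_{ar_a}\}$, minimizing \[\sum_{i=1}^a \left\| G\Big[\bigcup_{j=1}^{r_i} L_{ij}\Big] \right\|,\] and put $U_i = \bigcup_{j=1}^{r_i} L_{ij}$. Suppose $x$ is low. If $i \neq j$ are indices with $r_i \geq r_j \geq 3$ and some low vertex $w \in U_i \cap N(x)$ is adjacent to some low vertex $z \in U_j \cap N(x)$, then every low vertex in $(U_i \cup U_j) \cap N(x)$ is adjacent to all other vertices of $G[(U_i \cup U_j) \cap N(x)]$ (i.e. is universal in that induced subgraph).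
   Context: A vertex $v$ of $G$ is critical if $\chi(G - v) < \chi(G)$. A vertex $v$ is low if $d(v) = \chi(G) - 1$ and high otherwise. $N(x)$ is the neighborhood of $x$, and $\|H\|$ the number of edges of a graph $H$. Given $a \geq 1$ and $r_1, \ldots, r_a$ with $1 + \sum_i r_i = \chi(G)$, an $(r_1, \ldots, r_a)$-partitioned coloring of $G$ is a proper coloring of $G$ with exactly $\chi(G)$ color classes, written in the form $\{\{x\}, L_{11}, \ldots, L_{1r_1}, \ldots, L_{a1}, \ldots, L_{ar_a}\}$, where $\{x\}$ is a singleton color class and each $L_{ij}$ is a color class. *)

theory Defs
  imports Main
begin

definition simple_graph :: "'a set \<Rightarrow> ('a \<Rightarrow> 'a \<Rightarrow> bool) \<Rightarrow> bool" where
  "simple_graph V E \<longleftrightarrow> finite V \<and> (\<forall>u v. E u v \<longrightarrow> u \<in> V \<and> v \<in> V \<and> u \<noteq> v \<and> E v u)"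

definition proper_coloring :: "'a set \<Rightarrow> ('a \<Rightarrow> 'a \<Rightarrow> bool) \<Rightarrow> nat \<Rightarrow> ('a \<Rightarrow> nat) \<Rightarrow> bool" where
  "proper_coloring V E k c \<longleftrightarrow> (\<forall>v\<in>V. c v < k) \<and> (\<forall>u\<in>V. \<forall>v\<in>V. E u v \<longrightarrow> c u \<noteq> c v)"

definition colorable :: "'a set \<Rightarrow> ('a \<Rightarrow> 'a \<Rightarrow> bool) \<Rightarrow> nat \<Rightarrow> bool" where
  "colorable V E k \<longleftrightarrow> (\<exists>c. proper_coloring V E k c)"

definition chi :: "'a set \<Rightarrow> ('a \<Rightarrow> 'a \<Rightarrow> bool) \<Rightarrow> nat" where
  "chi V E = (LEAST k. colorable V E k)"

definition critical :: "'a set \<Rightarrow> ('a \<Rightarrow> 'a \<Rightarrow> bool) \<Rightarrow> 'a \<Rightarrow> bool" where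
  "critical V E v \<longleftrightarrow> v \<in> V \<and> chi (V - {v}) (\<lambda>x y. E x y \<and> x \<noteq> v \<and> y \<noteq> v) < chi V E"

definition nbhd :: "'a set \<Rightarrow> ('a \<Rightarrow> 'a \<Rightarrow> bool) \<Rightarrow> 'a \<Rightarrow> 'a set" where
  "nbhd V E x = {u \<in> V. E x u}"

definition degree :: "'a set \<Rightarrow> ('a \<Rightarrow> 'a \<Rightarrow> bool) \<Rightarrow> 'a \<Rightarrow> nat" where
  "degree V E v = card (nbhd V E v)"

definition low :: "'a set \<Rightarrow> ('a \<Rightarrow> 'a \<Rightarrow> bool) \<Rightarrow> 'a \<Rightarrow> bool" where
  "low V E v \<longleftrightarrow> degree V E v = chi V E - 1"

definition edges_in :: "('a \<Rightarrow> 'a \<Rightarrow> bool) \<Rightarrow> 'a set \<Rightarrow> nat" where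
  "edges_in E U = card {{u, v} | u v. u \<in> U \<and> v \<in> U \<and> E u v}"

definition independent :: "('a \<Rightarrow> 'a \<Rightarrow> bool) \<Rightarrow> 'a set \<Rightarrow> bool" where
  "independent E S \<longleftrightarrow> (\<forall>u\<in>S. \<forall>v\<in>S. \<not> E u v)"

definition partitioned_coloring ::
  "'a set \<Rightarrow> ('a \<Rightarrow> 'a \<Rightarrow> bool) \<Rightarrow> nat \<Rightarrow> (nat \<Rightarrow> nat) \<Rightarrow> 'a \<Rightarrow> (nat \<Rightarrow> nat \<Rightarrow> 'a set) \<Rightarrow> bool" where
  "partitioned_coloring V E a r x L \<longleftrightarrow>
     a \<ge> 1 \<and> 1 + (\<Sum>i=1..a. r i) = chi V E \<and> x \<in> V \<and>
     (\<forall>i\<in>{1..a}. \<forall>j\<in>{1..r i}. L i j \<noteq> {} \<and> independent E (L i j) \<and> x \<notin> L i j) \<and>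
     (\<forall>i\<in>{1..a}. \<forall>j\<in>{1..r i}. \<forall>i'\<in>{1..a}. \<forall>j'\<in>{1..r i'}.
        (i, j) \<noteq> (i', j') \<longrightarrow> L i j \<inter> L i' j' = {}) \<and>
     V = insert x (\<Union>i\<in>{1..a}. \<Union>j\<in>{1..r i}. L i j)"

definition partU :: "(nat \<Rightarrow> nat) \<Rightarrow> (nat \<Rightarrow> nat \<Rightarrow> 'a set) \<Rightarrow> nat \<Rightarrow> 'a set" where
  "partU r L i = (\<Union>j\<in>{1..r i}. L i j)"

definition pc_cost :: "('a \<Rightarrow> 'a \<Rightarrow> bool) \<Rightarrow> nat \<Rightarrow> (nat \<Rightarrow> nat) \<Rightarrow> (nat \<Rightarrow> nat \<Rightarrow> 'a set) \<Rightarrow> nat" where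
  "pc_cost E a r L = (\<Sum>i=1..a. edges_in E (partU r L i))"

end

theory Submission
  imports Defs
begin


definition path :: "('a \<Rightarrow> 'a \<Rightarrow> bool) \<Rightarrow> 'a list \<Rightarrow> bool" where
  "path R xs \<longleftrightarrow> xs \<noteq> [] \<and> distinct xs \<and> (\<forall>i. Suc i < length xs \<longrightarrow> R (xs!i) (xs!Suc i))"

lemma path_exists:
  assumes "R\<^sup>*\<^sup>* a b"
  shows "\<exists>xs. path R xs \<and> xs!0 = a \<and> last xs = b"
  using assms
proof (induction rule: rtranclp_induct)
  case base
  show ?case by (rule exI[of _ "[a]"]) (auto simp: path_def)
next
  case (step b c)
  then obtain xs where xs: "path R xs" "xs!0 = a" "last xs = b" by blast
  have ne: "xs \<noteq> []" using xs(1) unfolding path_def by auto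
  show ?case
  proof (cases "c \<in> set xs")
    case True
    then obtain k where k: "k < length xs" "xs!k = c" by (auto simp: in_set_conv_nth)
    let ?ys = "take (Suc k) xs"
    have "path R ?ys" using xs(1) k unfolding path_def by auto
    moreover have "?ys!0 = a" using xs(2) by simp
    moreover have "last ?ys = c" using k by (simp add: take_Suc_conv_app_nth)
    ultimately show ?thesis by blast
  next
    case False
    let ?ys = "xs @ [c]"
    have "path R ?ys"
      unfolding path_def
    proof (intro conjI allI impI)
      show "?ys \<noteq> []" by simp
      show "distinct ?ys" using xs(1) False unfolding path_def by auto
      fix i assume i: "Suc i < length ?ys"
      show "R (?ys!i) (?ys!Suc i)"
      proof (cases "Suc i < length xs")
        case True
        then show ?thesis using xs(1) unfolding path_def by (simp add: nth_append)
      next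
        case False
        then have "i = length xs - 1" "Suc i = length xs" using i by auto
        then show ?thesis using step(2) xs(3) ne by (simp add: nth_append last_conv_nth)
      qed
    qed
    moreover have "?ys!0 = a" using xs(2) ne by (simp add: nth_append)
    ultimately show ?thesis by auto
  qed
qed

lemma path_reach:
  assumes "path R P" "i < length P"
  shows "R\<^sup>*\<^sup>* (P!0) (P!i)"
  using assms(2)
proof (induction i)
  case 0 then show ?case by simp
next
  case (Suc i)
  then have "R (P!i) (P!Suc i)" using assms(1) unfolding path_def by auto
  then show ?case using Suc by (meson Suc_lessD rtranclp.rtrancl_into_rtrancl)
qed

lemma prefix_reach:
  assumes P: "path R P" and m: "0 < m" "m \<le> length P"
    and nb: "\<forall>l<m. \<forall>w. R (P!l) w \<longrightarrow> (0 < l \<and> w = P!(l-1)) \<or> (Suc l < length P \<and> w = P!Suc l)"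
    and R': "\<forall>x z. R' x z \<longrightarrow> R x z \<and> (m < length P \<longrightarrow> z \<noteq> P!m)"
    and reach: "R'\<^sup>*\<^sup>* (P!0) v"
  shows "v \<in> set (take m P)"
  using reach
proof (induction rule: rtranclp_induct)
  case base
  have "P \<noteq> []" using P unfolding path_def by auto
  then show ?case using m by (simp add: take_Suc_conv_app_nth hd_conv_nth in_set_conv_nth) (metis length_greater_0_conv nth_take)
next
  case (step v z)
  then obtain l where l: "l < length (take m P)" "take m P ! l = v" by (auto simp: in_set_conv_nth)
  then have l2: "l < m" "l < length P" "P!l = v" by auto
  have Rz: "R (P!l) z" "m < length P \<longrightarrow> z \<noteq> P!m" using R' step(2) l2 by auto
  from nb l2(1) Rz(1) have "(0 < l \<and> z = P!(l-1)) \<or> (Suc l < length P \<and> z = P!Suc l)" by blast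
  then show ?case
  proof
    assume "0 < l \<and> z = P!(l-1)"
    then show ?thesis using l2 by (auto simp: in_set_conv_nth intro!: exI[of _ "l-1"])
  next
    assume h: "Suc l < length P \<and> z = P!Suc l"
    show ?thesis
    proof (cases "Suc l < m")
      case True
      then show ?thesis using h by (auto simp: in_set_conv_nth intro!: exI[of _ "Suc l"])
    next
      case False
      then have "Suc l = m" using l2 by auto
      then show ?thesis using h Rz(2) by auto
    qed
  qed
qed

lemma rtranclp_sym:
  assumes "\<And>x y. R x y \<Longrightarrow> R y x" "R\<^sup>*\<^sup>* a b"
  shows "R\<^sup>*\<^sup>* b a"
  using assms(2)
proof (induction rule: rtranclp_induct)
  case base then show ?case by simp
next
  case (step y z)
  then show ?case using assms(1) by (meson converse_rtranclp_into_rtranclp)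
qed



locale PCL =
  fixes V :: "'a set" and E :: "'a \<Rightarrow> 'a \<Rightarrow> bool" and a :: nat and r :: "nat \<Rightarrow> nat"
  assumes G: "simple_graph V E"
    and a1: "a \<ge> 1"
    and rsum: "1 + (\<Sum>k=1..a. r k) = chi V E"
begin

definition "I = Sigma {1..a} (\<lambda>i. {1..r i})"

lemma finI: "finite I" unfolding I_def by auto

lemma cardI: "card I = (\<Sum>k=1..a. r k)"
  unfolding I_def by (subst card_SigmaI) auto

lemma chiI: "chi V E = card I + 1" using rsum cardI by simp

lemma finV: "finite V" using G unfolding simple_graph_def by auto
lemma Esym: "E u v \<Longrightarrow> E v u" using G unfolding simple_graph_def by auto
lemma EV: "E u v \<Longrightarrow> u \<in> V \<and> v \<in> V \<and> u \<noteq> v" using G unfolding simple_graph_def by auto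

lemma no_I_coloring:
  assumes "\<forall>v\<in>V. c v \<in> I" "\<forall>u\<in>V. \<forall>v\<in>V. E u v \<longrightarrow> c u \<noteq> c v"
  shows False
proof -
  obtain f where f: "bij_betw f I {0..<card I}" using ex_bij_betw_finite_nat[OF finI] by blast
  have "proper_coloring V E (card I) (f \<circ> c)"
    unfolding proper_coloring_def
  proof (intro conjI ballI impI)
    fix v assume "v \<in> V" thus "(f \<circ> c) v < card I" using assms(1) f
      by (auto simp: bij_betw_def)
  next
    fix u v assume "u \<in> V" "v \<in> V" "E u v"
    then have "c u \<noteq> c v" "c u \<in> I" "c v \<in> I" using assms by auto
    thus "(f \<circ> c) u \<noteq> (f \<circ> c) v" using f unfolding bij_betw_def inj_on_def by auto
  qed
  hence "colorable V E (card I)" unfolding colorable_def by blast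
  hence "chi V E \<le> card I" unfolding chi_def by (rule Least_le)
  thus False using chiI by simp
qed

definition state :: "'a \<Rightarrow> ('a \<Rightarrow> nat \<times> nat) \<Rightarrow> bool" where
  "state s c \<longleftrightarrow> s \<in> V \<and> (\<forall>v\<in>V-{s}. c v \<in> I) \<and> (\<forall>u\<in>V-{s}. \<forall>v\<in>V-{s}. E u v \<longrightarrow> c u \<noteq> c v)"

lemma merge:
  assumes "state s c" "g \<in> I"
  shows "\<exists>v\<in>V-{s}. E s v \<and> c v = g"
proof (rule ccontr)
  assume n: "\<not> ?thesis"
  let ?c = "c(s := g)"
  show False
  proof (rule no_I_coloring[of ?c])
    show "\<forall>v\<in>V. ?c v \<in> I" using assms unfolding state_def by auto
    show "\<forall>u\<in>V. \<forall>v\<in>V. E u v \<longrightarrow> ?c u \<noteq> ?c v"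
    proof (intro ballI impI)
      fix u v assume uv: "u \<in> V" "v \<in> V" "E u v"
      show "?c u \<noteq> ?c v"
      proof (cases "u = s")
        case True
        then have "v \<noteq> s" using EV uv by auto
        then show ?thesis using True n uv by auto
      next
        case False
        show ?thesis
        proof (cases "v = s")
          case True then show ?thesis using False n uv Esym by fastforce
        next
          case F2: False
          then show ?thesis using False assms uv unfolding state_def by auto
        qed
      qed
    qed
  qed
qed

definition Lof :: "'a \<Rightarrow> ('a \<Rightarrow> nat \<times> nat) \<Rightarrow> nat \<Rightarrow> nat \<Rightarrow> 'a set" where
  "Lof s c = (\<lambda>i j. {v \<in> V - {s}. c v = (i,j)})"

definition P :: "'a \<Rightarrow> ('a \<Rightarrow> nat \<times> nat) \<Rightarrow> nat \<Rightarrow> 'a set" where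
  "P s c i = {v\<in>V-{s}. fst (c v) = i}"

definition cost :: "'a \<Rightarrow> ('a \<Rightarrow> nat \<times> nat) \<Rightarrow> nat" where
  "cost s c = (\<Sum>i=1..a. edges_in E (P s c i))"

lemma partU_Lof:
  assumes "state s c" "i \<in> {1..a}"
  shows "partU r (Lof s c) i = P s c i"
proof
  show "partU r (Lof s c) i \<subseteq> P s c i" unfolding partU_def Lof_def P_def by auto
  show "P s c i \<subseteq> partU r (Lof s c) i"
  proof
    fix v assume v: "v \<in> P s c i"
    then have "c v \<in> I" "v \<in> V - {s}" "fst (c v) = i" using assms unfolding P_def state_def by auto
    then show "v \<in> partU r (Lof s c) i" unfolding partU_def Lof_def I_def
      by (cases "c v") auto
  qed
qed

lemma state_pc:
  assumes "state s c"
  shows "partitioned_coloring V E a r s (Lof s c)"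
  unfolding partitioned_coloring_def
proof (intro conjI)
  show "1 \<le> a" by (rule a1)
  show "1 + sum r {1..a} = chi V E" by (rule rsum)
  show "s \<in> V" using assms unfolding state_def by auto
  show "\<forall>i\<in>{1..a}. \<forall>j\<in>{1..r i}. Lof s c i j \<noteq> {} \<and> independent E (Lof s c i j) \<and> s \<notin> Lof s c i j"
  proof (intro ballI conjI)
    fix i j assume ij: "i \<in> {1..a}" "j \<in> {1..r i}"
    then have "(i,j) \<in> I" unfolding I_def by auto
    then obtain v where "v\<in>V-{s}" "c v = (i,j)" using merge[OF assms] by blast
    then show "Lof s c i j \<noteq> {}" unfolding Lof_def by auto
    show "independent E (Lof s c i j)" unfolding independent_def Lof_def
    proof (intro ballI notI)
      fix u v assume "u \<in> {v \<in> V - {s}. c v = (i, j)}" "v \<in> {v \<in> V - {s}. c v = (i, j)}" "E u v"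
      then show False using assms unfolding state_def by (metis (mono_tags, lifting) mem_Collect_eq)
    qed
    show "s \<notin> Lof s c i j" unfolding Lof_def by auto
  qed
  show "\<forall>i\<in>{1..a}. \<forall>j\<in>{1..r i}. \<forall>i'\<in>{1..a}. \<forall>j'\<in>{1..r i'}. (i, j) \<noteq> (i', j') \<longrightarrow> Lof s c i j \<inter> Lof s c i' j' = {}"
    unfolding Lof_def by auto
  show "V = insert s (\<Union>i\<in>{1..a}. \<Union>j\<in>{1..r i}. Lof s c i j)"
  proof
    show "V \<subseteq> insert s (\<Union>i\<in>{1..a}. \<Union>j\<in>{1..r i}. Lof s c i j)"
    proof
      fix v assume v: "v \<in> V"
      show "v \<in> insert s (\<Union>i\<in>{1..a}. \<Union>j\<in>{1..r i}. Lof s c i j)"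
      proof (cases "v = s")
        case False
        then have "c v \<in> I" using v assms unfolding state_def by auto
        then obtain i j where "c v = (i,j)" "i \<in> {1..a}" "j \<in> {1..r i}" unfolding I_def by auto
        then show ?thesis using v False unfolding Lof_def by auto
      qed simp
    qed
    show "insert s (\<Union>i\<in>{1..a}. \<Union>j\<in>{1..r i}. Lof s c i j) \<subseteq> V"
      using assms unfolding Lof_def state_def by auto
  qed
qed

lemma state_cost:
  assumes "state s c"
  shows "pc_cost E a r (Lof s c) = cost s c"
  unfolding pc_cost_def cost_def using partU_Lof[OF assms] by simp

lemma pcD:
  assumes "partitioned_coloring V E a r x L"
  shows "x \<in> V" "\<And>i j. i \<in> {1..a} \<Longrightarrow> j \<in> {1..r i} \<Longrightarrow> L i j \<noteq> {} \<and> independent E (L i j) \<and> x \<notin> L i j"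
    "\<And>i j i' j'. i \<in> {1..a} \<Longrightarrow> j \<in> {1..r i} \<Longrightarrow> i' \<in> {1..a} \<Longrightarrow> j' \<in> {1..r i'} \<Longrightarrow> (i, j) \<noteq> (i', j') \<Longrightarrow> L i j \<inter> L i' j' = {}"
    "V = insert x (\<Union>i\<in>{1..a}. \<Union>j\<in>{1..r i}. L i j)"
  using assms unfolding partitioned_coloring_def by auto

definition colL :: "(nat \<Rightarrow> nat \<Rightarrow> 'a set) \<Rightarrow> 'a \<Rightarrow> nat \<times> nat" where
  "colL L v = (SOME q. q \<in> I \<and> v \<in> L (fst q) (snd q))"

lemma colL:
  assumes pc: "partitioned_coloring V E a r x L" and v: "v \<in> V - {x}"
  shows "colL L v \<in> I" "v \<in> L (fst (colL L v)) (snd (colL L v))"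
    "\<And>q. q \<in> I \<Longrightarrow> v \<in> L (fst q) (snd q) \<Longrightarrow> colL L v = q"
proof -
  have ex: "\<exists>q. q \<in> I \<and> v \<in> L (fst q) (snd q)"
  proof -
    have "v \<in> (\<Union>i\<in>{1..a}. \<Union>j\<in>{1..r i}. L i j)" using pcD(4)[OF pc] v by auto
    then obtain i j where "i \<in> {1..a}" "j \<in> {1..r i}" "v \<in> L i j" by auto
    then show ?thesis unfolding I_def by (intro exI[of _ "(i,j)"]) auto
  qed
  show c1: "colL L v \<in> I" "v \<in> L (fst (colL L v)) (snd (colL L v))"
    using someI_ex[OF ex] unfolding colL_def by auto
  fix q assume q: "q \<in> I" "v \<in> L (fst q) (snd q)"
  show "colL L v = q"
  proof (rule ccontr)
    assume "colL L v \<noteq> q"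
    moreover obtain i j where ij: "colL L v = (i,j)" by (cases "colL L v")
    moreover obtain i' j' where ij': "q = (i',j')" by (cases q)
    ultimately have "L i j \<inter> L i' j' = {}"
      using pcD(3)[OF pc] c1(1) q(1) unfolding I_def by auto
    then show False using c1(2) q(2) ij ij' by auto
  qed
qed

lemma pc_state:
  assumes pc: "partitioned_coloring V E a r x L"
  shows "state x (colL L)"
  unfolding state_def
proof (intro conjI ballI impI)
  show "x \<in> V" using pcD(1)[OF pc] .
  fix v assume "v \<in> V - {x}" thus "colL L v \<in> I" using colL[OF pc] by auto
next
  fix u v assume u: "u \<in> V - {x}" and v: "v \<in> V - {x}" and e: "E u v"
  show "colL L u \<noteq> colL L v"
  proof
    assume eq: "colL L u = colL L v"
    have "u \<in> L (fst (colL L v)) (snd (colL L v))" "v \<in> L (fst (colL L v)) (snd (colL L v))"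
      using colL(2)[OF pc u] colL(2)[OF pc v] eq by auto
    moreover have "independent E (L (fst (colL L v)) (snd (colL L v)))"
      using pcD(2)[OF pc] colL(1)[OF pc v] unfolding I_def by auto
    ultimately show False using e unfolding independent_def by auto
  qed
qed

lemma pc_P:
  assumes pc: "partitioned_coloring V E a r x L" and i: "i \<in> {1..a}"
  shows "partU r L i = P x (colL L) i"
proof
  show "partU r L i \<subseteq> P x (colL L) i"
  proof
    fix v assume "v \<in> partU r L i"
    then obtain j where j: "j \<in> {1..r i}" "v \<in> L i j" unfolding partU_def by auto
    have pcx: "x \<notin> L i j" using pcD(2)[OF pc i j(1)] by auto
    have "v \<in> (\<Union>i\<in>{1..a}. \<Union>j\<in>{1..r i}. L i j)" using i j(1) j(2) by blast
    then have "v \<in> V" by (subst pcD(4)[OF pc]) blast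
    then have vV: "v \<in> V - {x}" using pcx j by auto
    have "(i,j) \<in> I" using i j unfolding I_def by auto
    then have "colL L v = (i,j)" using colL(3)[OF pc vV, of "(i,j)"] j by auto
    then show "v \<in> P x (colL L) i" using vV unfolding P_def by auto
  qed
next
  show "P x (colL L) i \<subseteq> partU r L i"
  proof
    fix v assume v: "v \<in> P x (colL L) i"
    then have vV: "v \<in> V - {x}" and f: "fst (colL L v) = i" unfolding P_def by auto
    obtain i' j' where ij: "colL L v = (i',j')" by (cases "colL L v")
    have "colL L v \<in> I" "v \<in> L (fst (colL L v)) (snd (colL L v))" using colL(1,2)[OF pc vV] by blast+
    then have "j' \<in> {1..r i}" "v \<in> L i j'" using f ij unfolding I_def by auto
    then show "v \<in> partU r L i" unfolding partU_def by blast
  qed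
qed

lemma pc_cost_colL:
  assumes pc: "partitioned_coloring V E a r x L"
  shows "pc_cost E a r L = cost x (colL L)"
  unfolding pc_cost_def cost_def using pc_P[OF pc] by simp

end


lemma edges_insert:
  assumes fin: "finite A" and sA: "s \<notin> A" and irr: "\<And>u. \<not> E u u" and sym: "\<And>u v. E u v \<Longrightarrow> E v u"
  shows "edges_in E (insert s A) = edges_in E A + card {w\<in>A. E s w}"
proof -
  define ES where "ES U = {{u, v} |u v. u \<in> U \<and> v \<in> U \<and> E u v}" for U
  have eq: "ES (insert s A) = ES A \<union> (\<lambda>w. {s,w}) ` {w\<in>A. E s w}"
  proof
    show "ES (insert s A) \<subseteq> ES A \<union> (\<lambda>w. {s,w}) ` {w\<in>A. E s w}"
    proof
      fix e assume "e \<in> ES (insert s A)"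
      then obtain u v where e: "e = {u,v}" "u \<in> insert s A" "v \<in> insert s A" "E u v"
        unfolding ES_def by blast
      show "e \<in> ES A \<union> (\<lambda>w. {s,w}) ` {w\<in>A. E s w}"
      proof (cases "u = s")
        case True
        then have "v \<noteq> s" using irr e(4) by auto
        then show ?thesis using e True by auto
      next
        case False
        show ?thesis
        proof (cases "v = s")
          case True
          then have "{u,v} = {s,u}" by auto
          then show ?thesis using e True False sym[OF e(4)] by auto
        next
          case F2: False
          then show ?thesis using e False unfolding ES_def by auto
        qed
      qed
    qed
    show "ES A \<union> (\<lambda>w. {s,w}) ` {w\<in>A. E s w} \<subseteq> ES (insert s A)"
      unfolding ES_def by blast
  qed
  have finES: "finite (ES A)"
  proof (rule finite_subset)
    show "ES A \<subseteq> Pow A" unfolding ES_def by auto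
  qed (use fin in auto)
  have disj: "ES A \<inter> (\<lambda>w. {s,w}) ` {w\<in>A. E s w} = {}"
    using sA unfolding ES_def by (auto simp: doubleton_eq_iff)
  have inj: "inj_on (\<lambda>w. {s,w}) {w\<in>A. E s w}"
    unfolding inj_on_def using sA by (auto simp: doubleton_eq_iff)
  have "card (ES (insert s A)) = card (ES A) + card ((\<lambda>w. {s,w}) ` {w\<in>A. E s w})"
    unfolding eq by (rule card_Un_disjoint[OF finES _ disj]) (use fin in auto)
  also have "\<dots> = card (ES A) + card {w\<in>A. E s w}" using card_image[OF inj] by simp
  finally show ?thesis unfolding edges_in_def ES_def .
qed

context PCL begin

definition TP :: "'a \<Rightarrow> ('a \<Rightarrow> nat \<times> nat) \<Rightarrow> nat \<Rightarrow> bool" where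
  "TP s c p \<longleftrightarrow> (\<forall>j\<in>{1..r p}. \<exists>!u. u \<in> V - {s} \<and> E s u \<and> c u = (p,j))"

definition Nb :: "'a \<Rightarrow> ('a \<Rightarrow> nat \<times> nat) \<Rightarrow> nat \<Rightarrow> 'a set" where
  "Nb s c p = {u \<in> V - {s}. E s u \<and> fst (c u) = p}"

lemma Eirr: "\<not> E u u" using EV by blast

lemma state_I: "state s c \<Longrightarrow> v \<in> V - {s} \<Longrightarrow> c v \<in> I" unfolding state_def by auto
lemma state_prop: "state s c \<Longrightarrow> u \<in> V - {s} \<Longrightarrow> v \<in> V - {s} \<Longrightarrow> E u v \<Longrightarrow> c u \<noteq> c v"
  unfolding state_def by auto

lemma I_fst: "q \<in> I \<Longrightarrow> fst q = p \<Longrightarrow> q = (p, snd q) \<and> snd q \<in> {1..r p} \<and> p \<in> {1..a}"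
  unfolding I_def by auto

lemma card_Nb:
  assumes st: "state s c" and tp: "TP s c p" and p: "p \<in> {1..a}"
  shows "card (Nb s c p) = r p"
proof -
  have "bij_betw (\<lambda>u. snd (c u)) (Nb s c p) {1..r p}"
    unfolding bij_betw_def
  proof (intro conjI)
    show "inj_on (\<lambda>u. snd (c u)) (Nb s c p)"
    proof (rule inj_onI)
      fix u v assume u: "u \<in> Nb s c p" and v: "v \<in> Nb s c p" and eq: "snd (c u) = snd (c v)"
      have cu: "c u = (p, snd (c u))" "snd (c u) \<in> {1..r p}"
        using I_fst[OF state_I[OF st] ] u unfolding Nb_def by auto
      have cv: "c v = (p, snd (c u))" using I_fst[OF state_I[OF st]] v eq unfolding Nb_def by auto
      show "u = v" using tp cu cv u v unfolding TP_def Nb_def by (metis (mono_tags, lifting) mem_Collect_eq)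
    qed
    show "(\<lambda>u. snd (c u)) ` Nb s c p = {1..r p}"
    proof
      show "(\<lambda>u. snd (c u)) ` Nb s c p \<subseteq> {1..r p}"
        using I_fst[OF state_I[OF st]] unfolding Nb_def by auto
      show "{1..r p} \<subseteq> (\<lambda>u. snd (c u)) ` Nb s c p"
      proof
        fix j assume j: "j \<in> {1..r p}"
        then obtain u where "u \<in> V - {s}" "E s u" "c u = (p,j)" using tp unfolding TP_def by blast
        then show "j \<in> (\<lambda>u. snd (c u)) ` Nb s c p" unfolding Nb_def by force
      qed
    qed
  qed
  then show ?thesis by (simp add: bij_betw_same_card)
qed

lemma P_move:
  assumes st: "state s c" and u: "u \<in> V - {s}" "fst (c u) = p"
  shows "P u (c(s := c u)) q = (if q = p then insert s (P s c p - {u}) else P s c q)"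
  using assms unfolding P_def state_def by auto

lemma finP: "finite (P s c q)" using finV unfolding P_def by auto

lemma low_unique:
  assumes st: "state s c" and low: "low V E s" and g: "g \<in> I"
  shows "\<exists>!w. w \<in> V - {s} \<and> E s w \<and> c w = g"
proof -
  let ?N = "nbhd V E s"
  have NV: "?N \<subseteq> V - {s}" unfolding nbhd_def using Eirr by auto
  have finN: "finite ?N" using finV unfolding nbhd_def by auto
  have img: "c ` ?N = I"
  proof
    show "c ` ?N \<subseteq> I" using NV state_I[OF st] by blast
    show "I \<subseteq> c ` ?N"
    proof
      fix g assume "g \<in> I"
      then obtain v where "v \<in> V - {s}" "E s v" "c v = g" using merge[OF st] by blast
      then show "g \<in> c ` ?N" unfolding nbhd_def by auto
    qed
  qed
  have "card ?N = card I" using low chiI unfolding low_def degree_def by simp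
  then have inj: "inj_on c ?N" using img finN by (simp add: eq_card_imp_inj_on)
  obtain v where v: "v \<in> V - {s}" "E s v" "c v = g" using merge[OF st g] by blast
  show ?thesis
  proof (rule ex1I[of _ v])
    show "v \<in> V - {s} \<and> E s v \<and> c v = g" using v by auto
    fix w assume w: "w \<in> V - {s} \<and> E s w \<and> c w = g"
    then show "w = v" using v inj unfolding inj_on_def nbhd_def by auto
  qed
qed

lemma low_TP:
  assumes st: "state s c" and low: "low V E s" and p: "p \<in> {1..a}"
  shows "TP s c p"
  unfolding TP_def
proof
  fix j assume "j \<in> {1..r p}"
  then have "(p,j) \<in> I" using p unfolding I_def by auto
  then show "\<exists>!u. u \<in> V - {s} \<and> E s u \<and> c u = (p, j)" using low_unique[OF st low] by blast
qed

end

locale PCM = PCL +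
  fixes M :: nat
  assumes Mmin: "\<And>s c. state s c \<Longrightarrow> M \<le> cost s c"
begin

definition good :: "'a \<Rightarrow> ('a \<Rightarrow> nat \<times> nat) \<Rightarrow> bool" where
  "good s c \<longleftrightarrow> state s c \<and> cost s c = M"

lemma cost_split:
  assumes p: "p \<in> {1..a}"
  shows "cost s c = edges_in E (P s c p) + (\<Sum>q\<in>{1..a}-{p}. edges_in E (P s c q))"
  unfolding cost_def using p by (simp add: sum.remove)

lemma TM:
  assumes g: "good s c" and p: "p \<in> {1..a}" and tp: "TP s c p"
    and u: "u \<in> V - {s}" "E s u" "fst (c u) = p"
  shows "good u (c(s := c u)) \<and> TP u (c(s := c u)) p"
proof -
  let ?c = "c(s := c u)"
  have st: "state s c" using g unfolding good_def by auto
  have sV: "s \<in> V" using st unfolding state_def by auto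
  obtain j0 where cu: "c u = (p, j0)" "j0 \<in> {1..r p}"
    using I_fst[OF state_I[OF st u(1)] u(3)] by blast
  have uniq: "\<And>w. w \<in> V - {s} \<Longrightarrow> E s w \<Longrightarrow> c w = c u \<Longrightarrow> w = u"
    using tp cu u unfolding TP_def by metis
  have st': "state u ?c"
    unfolding state_def
  proof (intro conjI ballI impI)
    show "u \<in> V" using u by auto
    fix v assume "v \<in> V - {u}" then show "?c v \<in> I"
      using state_I[OF st] state_I[OF st u(1)] by (cases "v = s") auto
  next
    fix v w assume v: "v \<in> V - {u}" and w: "w \<in> V - {u}" and e: "E v w"
    show "?c v \<noteq> ?c w"
    proof (cases "v = s")
      case True
      then have "w \<noteq> s" using e Eirr by auto
      then show ?thesis using True uniq[of w] e w by auto
    next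
      case False
      show ?thesis
      proof (cases "w = s")
        case True
        then show ?thesis using False uniq[of v] Esym[OF e] v by auto
      next
        case F2: False
        then show ?thesis using False state_prop[OF st, of v w] v w e by auto
      qed
    qed
  qed
  define A where "A = P s c p - {u}"
  have finA: "finite A" unfolding A_def using finP by auto
  have uA: "u \<notin> A" "s \<notin> A" unfolding A_def P_def by auto
  have Pp: "P s c p = insert u A" using u unfolding A_def P_def by auto
  have Pp': "P u ?c p = insert s A" using P_move[OF st u(1) u(3)] unfolding A_def by simp
  have Pq: "\<And>q. q \<noteq> p \<Longrightarrow> P u ?c q = P s c q" using P_move[OF st u(1) u(3)] by simp
  have e1: "edges_in E (P s c p) = edges_in E A + card {w\<in>A. E u w}"
    unfolding Pp by (rule edges_insert[OF finA uA(1) Eirr Esym])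
  have e2: "edges_in E (P u ?c p) = edges_in E A + card {w\<in>A. E s w}"
    unfolding Pp' by (rule edges_insert[OF finA uA(2) Eirr Esym])
  have NbA: "{w\<in>A. E s w} = Nb s c p - {u}" unfolding A_def P_def Nb_def by auto
  have uNb: "u \<in> Nb s c p" using u unfolding Nb_def by auto
  have finNb: "finite (Nb s c p)" using finV unfolding Nb_def by auto
  have cs: "card {w\<in>A. E s w} = r p - 1"
    unfolding NbA using card_Nb[OF st tp p] uNb finNb by (simp add: card_Diff_singleton)
  define B where "B = {w\<in>A. E u w}"
  have finB: "finite B" using finA unfolding B_def by auto
  have rest: "(\<Sum>q\<in>{1..a}-{p}. edges_in E (P u ?c q)) = (\<Sum>q\<in>{1..a}-{p}. edges_in E (P s c q))"
    using Pq by (intro sum.cong) auto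
  have costeq: "cost u ?c + card B = cost s c + (r p - 1)"
    using cost_split[OF p, of u ?c] cost_split[OF p, of s c] rest e1 e2 cs unfolding B_def by simp
  have "M \<le> cost u ?c" using Mmin[OF st'] .
  moreover have "cost s c = M" using g unfolding good_def by auto
  ultimately have cB: "card B \<le> r p - 1" using costeq by simp
  define f where "f w = snd (c w)" for w
  have img: "f ` B = {1..r p} - {j0}"
  proof
    show "f ` B \<subseteq> {1..r p} - {j0}"
    proof
      fix j assume "j \<in> f ` B"
      then obtain w where w: "w \<in> B" "j = f w" by auto
      then have wV: "w \<in> V - {s}" "fst (c w) = p" "E u w" "w \<noteq> u" unfolding B_def A_def P_def by auto
      have "c w \<noteq> c u" using state_prop[OF st u(1) wV(1) wV(3)] by auto
      then show "j \<in> {1..r p} - {j0}" using I_fst[OF state_I[OF st wV(1)] wV(2)] w(2) cu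
        unfolding f_def by (metis DiffI singletonD)
    qed
    show "{1..r p} - {j0} \<subseteq> f ` B"
    proof
      fix j assume j: "j \<in> {1..r p} - {j0}"
      then have "(p,j) \<in> I" using p unfolding I_def by auto
      then obtain w where w: "w \<in> V - {u}" "E u w" "?c w = (p,j)" using merge[OF st'] by blast
      have "w \<noteq> s" using w(3) cu j by auto
      then have "c w = (p,j)" "w \<in> B" using w unfolding B_def A_def P_def by auto
      then show "j \<in> f ` B" unfolding f_def by force
    qed
  qed
  have cimg: "card (f ` B) = r p - 1" unfolding img using cu(2) by (simp add: card_Diff_singleton)
  have cB2: "card B = r p - 1" using card_image_le[OF finB, of f] cimg cB by simp
  have inj: "inj_on f B" using cimg cB2 finB by (simp add: eq_card_imp_inj_on)
  have good': "good u ?c" using costeq cB2 g st' unfolding good_def by simp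
  have tp': "TP u ?c p"
    unfolding TP_def
  proof
    fix j assume j: "j \<in> {1..r p}"
    show "\<exists>!w. w \<in> V - {u} \<and> E u w \<and> ?c w = (p, j)"
    proof (cases "j = j0")
      case True
      show ?thesis
      proof (rule ex1I[of _ s])
        show "s \<in> V - {u} \<and> E u s \<and> ?c s = (p, j)" using u sV True cu Esym by auto
        fix w assume w: "w \<in> V - {u} \<and> E u w \<and> ?c w = (p, j)"
        show "w = s"
        proof (rule ccontr)
          assume "w \<noteq> s"
          then have "c w = c u" "w \<in> V - {s}" using w True cu by auto
          then show False using state_prop[OF st u(1), of w] w by auto
        qed
      qed
    next
      case False
      then have j': "j \<in> {1..r p} - {j0}" using j by auto
      then have "j \<in> f ` B" using img by simp
      then obtain w0 where w0: "w0 \<in> B" "f w0 = j" by auto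
      have w0p: "w0 \<in> V - {u} \<and> E u w0 \<and> ?c w0 = (p, j)"
        using w0 unfolding B_def A_def P_def f_def
        by (auto intro: prod_eqI)
      have inB: "\<And>w. w \<in> V - {u} \<Longrightarrow> E u w \<Longrightarrow> ?c w = (p, j) \<Longrightarrow> w \<in> B \<and> f w = j"
      proof -
        fix w assume w: "w \<in> V - {u}" "E u w" "?c w = (p, j)"
        have "w \<noteq> s" using w(3) cu False by auto
        then show "w \<in> B \<and> f w = j" using w unfolding B_def A_def P_def f_def by auto
      qed
      show ?thesis
      proof (rule ex1I[of _ w0])
        show "w0 \<in> V - {u} \<and> E u w0 \<and> ?c w0 = (p, j)" by (rule w0p)
        fix w assume "w \<in> V - {u} \<and> E u w \<and> ?c w = (p, j)"
        then have "w \<in> B" "f w = j" using inB by auto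
        then show "w = w0" using inj w0 unfolding inj_on_def by auto
      qed
    qed
  qed
  show ?thesis using good' tp' by auto
qed

lemma REG:
  assumes g: "good s c" and p: "p \<in> {1..a}" and tp: "TP s c p"
    and R: "(\<lambda>x y. x \<in> insert s (P s c p) \<and> y \<in> insert s (P s c p) \<and> E x y)\<^sup>*\<^sup>* s v"
  shows "card {w \<in> insert s (P s c p). E v w} = r p"
proof -
  define W where "W = insert s (P s c p)"
  have "\<exists>c'. good v c' \<and> TP v c' p \<and> insert v (P v c' p) = W"
    using R unfolding W_def[symmetric]
  proof (induction rule: rtranclp_induct)
    case base
    then show ?case using g tp unfolding W_def by auto
  next
    case (step v u)
    then obtain c' where c': "good v c'" "TP v c' p" "insert v (P v c' p) = W" by blast
    have st: "state v c'" using c'(1) unfolding good_def by auto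
    have uv: "u \<noteq> v" using step(2) Eirr by auto
    then have uP: "u \<in> P v c' p" using step(2) c'(3) by auto
    then have u: "u \<in> V - {v}" "fst (c' u) = p" unfolding P_def by auto
    have "good u (c'(v := c' u)) \<and> TP u (c'(v := c' u)) p"
      by (rule TM[OF c'(1) p c'(2) u(1) _ u(2)]) (use step(2) in auto)
    moreover have "insert u (P u (c'(v := c' u)) p) = W"
      using P_move[OF st u] c'(3) uP by auto
    ultimately show ?case by blast
  qed
  then obtain c' where c': "good v c'" "TP v c' p" "insert v (P v c' p) = W" by blast
  have st: "state v c'" using c'(1) unfolding good_def by auto
  have "{w \<in> W. E v w} = Nb v c' p" unfolding c'(3)[symmetric] Nb_def P_def using Eirr by auto
  then show ?thesis using card_Nb[OF st c'(2) p] unfolding W_def by simp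
qed

end


locale BR = PCM +
  fixes s :: 'a and c0 :: "'a \<Rightarrow> nat \<times> nat" and p :: nat
  assumes g0: "good s c0" and p: "p \<in> {1..a}" and tp0: "TP s c0 p" and r3: "3 \<le> r p"
begin

definition "W = insert s (P s c0 p)"
definition "D = {v. (\<lambda>x y. x \<in> W \<and> y \<in> W \<and> E x y)\<^sup>*\<^sup>* s v}"

lemma st0: "state s c0" using g0 unfolding good_def by auto
lemma sV: "s \<in> V" using st0 unfolding state_def by auto
lemma WV: "W \<subseteq> V" unfolding W_def P_def using sV by auto
lemma sW: "s \<in> W" unfolding W_def by auto
lemma sD: "s \<in> D" unfolding D_def by auto

lemma regD: "v \<in> D \<Longrightarrow> card {w\<in>W. E v w} = r p"
  unfolding D_def W_def using REG[OF g0 p tp0] by auto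

lemma finW: "finite W" using WV finV finite_subset by auto

definition Kst :: "('a \<Rightarrow> nat \<times> nat) \<Rightarrow> bool" where
  "Kst c \<longleftrightarrow> state s c \<and> (\<forall>v\<in>W-{s}. fst (c v) = p) \<and> (\<forall>v\<in>V-W. c v = c0 v)"

lemma Kst0: "Kst c0" unfolding Kst_def W_def P_def using st0 by auto

lemma Kst_state: "Kst c \<Longrightarrow> state s c" unfolding Kst_def by auto

lemma Wchar:
  assumes "Kst c" "v \<in> V - {s}"
  shows "v \<in> W \<longleftrightarrow> fst (c v) = p"
proof
  assume "v \<in> W" then show "fst (c v) = p" using assms unfolding Kst_def by auto
next
  assume f: "fst (c v) = p"
  show "v \<in> W"
  proof (rule ccontr)
    assume "v \<notin> W"
    then have "c v = c0 v" using assms unfolding Kst_def by auto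
    then have "v \<in> P s c0 p" using f assms unfolding P_def by auto
    then show False using \<open>v \<notin> W\<close> unfolding W_def by auto
  qed
qed

lemma colW: "Kst c \<Longrightarrow> v \<in> V - {s} \<Longrightarrow> c v = (p,j) \<Longrightarrow> v \<in> W"
  using Wchar by auto

lemma D_step: "u \<in> D \<Longrightarrow> v \<in> W \<Longrightarrow> E u v \<Longrightarrow> v \<in> D"
proof -
  assume "u \<in> D" "v \<in> W" "E u v"
  moreover have "u \<in> W"
  proof -
    have "(\<lambda>x y. x \<in> W \<and> y \<in> W \<and> E x y)\<^sup>*\<^sup>* s u" using \<open>u \<in> D\<close> unfolding D_def by auto
    then show ?thesis using sW by (induction rule: rtranclp_induct) auto
  qed
  ultimately show "v \<in> D" unfolding D_def by (auto intro: rtranclp.rtrancl_into_rtrancl)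
qed

lemma col_I: "Kst c \<Longrightarrow> v \<in> V - {s} \<Longrightarrow> c v = (p,j) \<Longrightarrow> j \<in> {1..r p}"
  using state_I[OF Kst_state] I_fst by fastforce

lemma COUNT:
  assumes K: "Kst c" and u: "u \<in> D" and J: "J \<subseteq> {1..r p}"
    and A: "A \<subseteq> {w\<in>W. E u w}" and Acol: "\<forall>w\<in>A. w = s \<or> snd (c w) \<in> J"
    and all: "\<forall>j\<in>{1..r p} - J. \<exists>w\<in>V-{s}. E u w \<and> c w = (p,j)"
  shows "card A \<le> card J"
proof -
  let ?Jf = "{1..r p} - J"
  obtain g where g: "\<And>j. j \<in> ?Jf \<Longrightarrow> g j \<in> V - {s} \<and> E u (g j) \<and> c (g j) = (p,j)"
    using all by metis
  have inj: "inj_on g ?Jf"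
    unfolding inj_on_def using g by (metis snd_conv)
  have gW: "g ` ?Jf \<subseteq> {w\<in>W. E u w}" using g colW[OF K] by auto
  have disj: "A \<inter> g ` ?Jf = {}"
  proof (rule ccontr)
    assume "A \<inter> g ` ?Jf \<noteq> {}"
    then obtain w where w: "w \<in> A" "w \<in> g ` ?Jf" by blast
    then obtain j where j0: "j \<in> ?Jf" "w = g j" by blast
    then have j: "j \<in> ?Jf" "g j \<in> A" using w by auto
    then have "g j \<noteq> s" "snd (c (g j)) = j" using g by auto
    then show False using Acol j by auto
  qed
  have fin: "finite {w\<in>W. E u w}" using finW by auto
  have "card A + card (g ` ?Jf) = card (A \<union> g ` ?Jf)"
    using disj fin A gW by (metis card_Un_disjoint finite_subset)
  also have "\<dots> \<le> card {w\<in>W. E u w}" using A gW fin by (intro card_mono) auto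
  also have "\<dots> = r p" using regD[OF u] .
  finally have "card A + card ?Jf \<le> r p" using card_image[OF inj] by simp
  moreover have "card ?Jf = r p - card J" using J by (simp add: card_Diff_subset finite_subset)
  moreover have "card J \<le> r p" using J by (metis card_atLeastAtMost card_mono finite_atLeastAtMost diff_Suc_1)
  ultimately show ?thesis by linarith
qed

lemma TPk:
  assumes K: "Kst c" and j: "j \<in> {1..r p}"
  shows "\<exists>!y. y \<in> V - {s} \<and> E s y \<and> c y = (p,j)"
proof -
  have st: "state s c" using Kst_state[OF K] .
  have "(p,j) \<in> I" using p j unfolding I_def by auto
  then obtain y where y: "y \<in> V - {s}" "E s y" "c y = (p,j)" using merge[OF st] by blast
  show ?thesis
  proof (rule ex1I[of _ y])
    show "y \<in> V - {s} \<and> E s y \<and> c y = (p,j)" using y by auto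
    fix y' assume y': "y' \<in> V - {s} \<and> E s y' \<and> c y' = (p,j)"
    show "y' = y"
    proof (rule ccontr)
      assume ne: "y' \<noteq> y"
      have "card {y, y'} \<le> card {j}"
      proof (rule COUNT[OF K sD])
        show "{j} \<subseteq> {1..r p}" using j by auto
        show "{y, y'} \<subseteq> {w\<in>W. E s w}" using y y' colW[OF K] by auto
        show "\<forall>w\<in>{y, y'}. w = s \<or> snd (c w) \<in> {j}" using y y' by auto
        show "\<forall>j'\<in>{1..r p} - {j}. \<exists>w\<in>V-{s}. E s w \<and> c w = (p,j')"
        proof
          fix j' assume "j' \<in> {1..r p} - {j}"
          then have "(p,j') \<in> I" using p unfolding I_def by auto
          then show "\<exists>w\<in>V-{s}. E s w \<and> c w = (p,j')" using merge[OF st] by auto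
        qed
      qed
      then show False using ne by simp
    qed
  qed
qed

lemma tok_uniq: "Kst c \<Longrightarrow> y \<in> V - {s} \<Longrightarrow> E s y \<Longrightarrow> y' \<in> V - {s} \<Longrightarrow> E s y' \<Longrightarrow> c y = (p,j) \<Longrightarrow> c y' = (p,j) \<Longrightarrow> y = y'"
  using TPk col_I by metis

lemma tokD: "Kst c \<Longrightarrow> y \<in> V - {s} \<Longrightarrow> E s y \<Longrightarrow> fst (c y) = p \<Longrightarrow> y \<in> D"
  using D_step[OF sD] Wchar by auto

definition recol :: "('a \<Rightarrow> nat \<times> nat) \<Rightarrow> 'a \<Rightarrow> nat \<Rightarrow> 'a \<Rightarrow> nat \<times> nat" where
  "recol c u j = c(u := (p,j))"

lemma Kst_recol:
  assumes K: "Kst c" and u: "u \<in> W - {s}" and j: "j \<in> {1..r p}"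
    and free: "\<forall>w\<in>V-{s}. E u w \<longrightarrow> c w \<noteq> (p,j)"
  shows "Kst (c(u := (p,j)))"
  unfolding Kst_def state_def
proof (intro conjI ballI impI)
  show "s \<in> V" by (rule sV)
  have uV: "u \<in> V - {s}" using u WV by auto
  fix v assume "v \<in> V - {s}" then show "(c(u := (p,j))) v \<in> I"
    using state_I[OF Kst_state[OF K]] p j unfolding I_def by auto
next
  fix v w assume v: "v \<in> V - {s}" and w: "w \<in> V - {s}" and e: "E v w"
  show "(c(u := (p,j))) v \<noteq> (c(u := (p,j))) w"
    using free v w e Esym state_prop[OF Kst_state[OF K] v w e] by auto
next
  fix v assume "v \<in> W - {s}" then show "fst ((c(u := (p,j))) v) = p" using K unfolding Kst_def by auto
next
  fix v assume "v \<in> V - W" then show "(c(u := (p,j))) v = c0 v" using K u unfolding Kst_def by auto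
qed

definition Kg :: "('a \<Rightarrow> nat \<times> nat) \<Rightarrow> nat \<Rightarrow> nat \<Rightarrow> 'a \<Rightarrow> 'a \<Rightarrow> bool" where
  "Kg c j j' u v \<longleftrightarrow> u \<in> V - {s} \<and> v \<in> V - {s} \<and> c u \<in> {(p,j),(p,j')} \<and> c v \<in> {(p,j),(p,j')} \<and> E u v"

lemma Kg_sym: "Kg c j j' u v \<Longrightarrow> Kg c j j' v u" unfolding Kg_def using Esym by auto
lemma Kg_comm: "Kg c j j' = Kg c j' j" unfolding Kg_def by (intro ext) auto

definition comp :: "('a \<Rightarrow> nat \<times> nat) \<Rightarrow> nat \<Rightarrow> nat \<Rightarrow> 'a \<Rightarrow> 'a set" where
  "comp c j j' y = {v. (Kg c j j')\<^sup>*\<^sup>* y v}"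

lemma comp_col:
  assumes "v \<in> comp c j j' y" "y \<in> V - {s}" "c y \<in> {(p,j),(p,j')}"
  shows "v \<in> V - {s} \<and> c v \<in> {(p,j),(p,j')}"
proof -
  have "(Kg c j j')\<^sup>*\<^sup>* y v" using assms(1) unfolding comp_def by auto
  then show ?thesis using assms(2,3) by (induction rule: rtranclp_induct) (auto simp: Kg_def)
qed

lemma comp_D:
  assumes K: "Kst c" and "v \<in> comp c j j' y" "y \<in> D"
  shows "v \<in> D"
proof -
  have "(Kg c j j')\<^sup>*\<^sup>* y v" using assms(2) unfolding comp_def by auto
  then show ?thesis using assms(3)
  proof (induction rule: rtranclp_induct)
    case (step v w)
    then show ?case using D_step colW[OF K] unfolding Kg_def by blast
  qed auto
qed

definition sw :: "('a \<Rightarrow> nat \<times> nat) \<Rightarrow> 'a set \<Rightarrow> nat \<Rightarrow> nat \<Rightarrow> 'a \<Rightarrow> nat \<times> nat" where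
  "sw c S j j' v = (if v \<in> S then (if c v = (p,j) then (p,j') else (p,j)) else c v)"

lemma Kst_sw:
  assumes K: "Kst c" and j: "j \<in> {1..r p}" "j' \<in> {1..r p}"
    and S: "S \<subseteq> {v\<in>V-{s}. c v \<in> {(p,j),(p,j')}}"
    and cl: "\<forall>x\<in>S. \<forall>y. Kg c j j' x y \<longrightarrow> y \<in> S"
  shows "Kst (sw c S j j')"
  unfolding Kst_def state_def
proof (intro conjI ballI impI)
  show "s \<in> V" by (rule sV)
  fix v assume "v \<in> V - {s}" then show "sw c S j j' v \<in> I"
    using state_I[OF Kst_state[OF K]] p j unfolding I_def sw_def by auto
next
  fix u v assume u: "u \<in> V - {s}" and v: "v \<in> V - {s}" and e: "E u v"
  have ne: "c u \<noteq> c v" using state_prop[OF Kst_state[OF K] u v e] .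
  show "sw c S j j' u \<noteq> sw c S j j' v"
  proof (cases "u \<in> S")
    case True
    show ?thesis
    proof (cases "v \<in> S")
      case True
      have "c u \<in> {(p,j),(p,j')}" "c v \<in> {(p,j),(p,j')}" using \<open>u \<in> S\<close> True S by auto
      then show ?thesis using \<open>u \<in> S\<close> True ne unfolding sw_def by auto
    next
      case False
      have "\<not> Kg c j j' u v" using cl True False by auto
      then have "c v \<notin> {(p,j),(p,j')}" using u v e S True unfolding Kg_def by auto
      then show ?thesis using True False unfolding sw_def by auto
    qed
  next
    case False
    show ?thesis
    proof (cases "v \<in> S")
      case True
      have "\<not> Kg c j j' v u" using cl True False by auto
      then have "c u \<notin> {(p,j),(p,j')}" using u v e S True Esym unfolding Kg_def by auto
      then show ?thesis using True False unfolding sw_def by auto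
    next
      case F2: False
      then show ?thesis using False ne unfolding sw_def by auto
    qed
  qed
next
  fix v assume "v \<in> W - {s}" then show "fst (sw c S j j' v) = p" using K unfolding Kst_def sw_def by auto
next
  fix v assume v: "v \<in> V - W"
  have "v \<notin> S"
  proof
    assume "v \<in> S"
    then have "v \<in> V - {s}" "fst (c v) = p" using S by auto
    then show False using Wchar[OF K] v by auto
  qed
  then show "sw c S j j' v = c0 v" using K v unfolding Kst_def sw_def by auto
qed

lemma SEP:
  assumes K: "Kst c" and j: "j \<in> {1..r p}" "j' \<in> {1..r p}" "j \<noteq> j'"
    and yS: "y \<in> S" and cy: "c y = (p,j)" and ey: "E s y"
    and S: "S \<subseteq> {v\<in>V-{s}. c v \<in> {(p,j),(p,j')}}"
    and cl: "\<forall>x\<in>S. \<forall>z. Kg c j j' x z \<longrightarrow> z \<in> S"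
    and sn: "\<forall>v\<in>S. E s v \<longrightarrow> v = y"
  shows False
proof -
  let ?c = "sw c S j j'"
  have K': "Kst ?c" by (rule Kst_sw[OF K j(1,2) S cl])
  have "(p,j) \<in> I" using p j unfolding I_def by auto
  then obtain v where v: "v \<in> V - {s}" "E s v" "?c v = (p,j)" using merge[OF Kst_state[OF K']] by blast
  show False
  proof (cases "v \<in> S")
    case True
    then have "v = y" using sn v by auto
    then show False using v cy True j(3) unfolding sw_def by auto
  next
    case False
    then have "c v = (p,j)" using v unfolding sw_def by auto
    moreover have "y \<in> V - {s}" using yS S by auto
    ultimately have "v = y" using tok_uniq[OF K v(1) v(2) _ ey _ cy] by auto
    then show False using False yS by auto
  qed
qed

lemma COMP:
  assumes K: "Kst c" and j: "j \<in> {1..r p}" "j' \<in> {1..r p}" "j \<noteq> j'"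
    and y: "y \<in> V - {s}" "E s y" "c y = (p,j)"
    and y': "y' \<in> V - {s}" "E s y'" "c y' = (p,j')"
  shows "y' \<in> comp c j j' y"
proof (rule ccontr)
  assume n: "y' \<notin> comp c j j' y"
  let ?S = "comp c j j' y"
  show False
  proof (rule SEP[OF K j _ y(3) y(2)])
    show "y \<in> ?S" unfolding comp_def by auto
    show "?S \<subseteq> {v\<in>V-{s}. c v \<in> {(p,j),(p,j')}}"
    proof
      fix v assume "v \<in> ?S"
      then show "v \<in> {v\<in>V-{s}. c v \<in> {(p,j),(p,j')}}" using comp_col[of v c j j' y] y by auto
    qed
    show "\<forall>x\<in>?S. \<forall>z. Kg c j j' x z \<longrightarrow> z \<in> ?S" unfolding comp_def
      by (auto intro: rtranclp.rtrancl_into_rtrancl)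
    show "\<forall>v\<in>?S. E s v \<longrightarrow> v = y"
    proof (intro ballI impI)
      fix v assume v: "v \<in> ?S" "E s v"
      have vc: "v \<in> V - {s}" "c v \<in> {(p,j),(p,j')}" using comp_col[OF v(1)] y by auto
      show "v = y"
      proof (cases "c v = (p,j)")
        case True then show ?thesis using tok_uniq[OF K vc(1) v(2) y(1) y(2) True y(3)] by auto
      next
        case False
        then have "c v = (p,j')" using vc by auto
        then have "v = y'" using tok_uniq[OF K vc(1) v(2) y'(1) y'(2) _ y'(3)] by auto
        then show ?thesis using v n by auto
      qed
    qed
  qed
qed

lemma T1ex:
  assumes K: "Kst c" and y: "y \<in> V - {s}" "E s y" "c y = (p,j)"
    and j': "j' \<in> {1..r p}" "j' \<noteq> j"
  shows "\<exists>w\<in>V-{s}. E y w \<and> c w = (p,j')"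
proof (rule ccontr)
  assume n: "\<not> ?thesis"
  have yW: "y \<in> W - {s}" using colW[OF K y(1) y(3)] y by auto
  have K': "Kst (c(y := (p,j')))" by (rule Kst_recol[OF K yW j'(1)]) (use n in auto)
  have j: "j \<in> {1..r p}" using col_I[OF K y(1) y(3)] .
  have "(p,j) \<in> I" using p j unfolding I_def by auto
  then obtain v where v: "v \<in> V - {s}" "E s v" "(c(y := (p,j'))) v = (p,j)"
    using merge[OF Kst_state[OF K']] by blast
  have "v \<noteq> y" using v(3) j' by auto
  then have "c v = (p,j)" using v by auto
  then have "v = y" using tok_uniq[OF K v(1) v(2) y(1) y(2) _ y(3)] by auto
  then show False using \<open>v \<noteq> y\<close> by auto
qed

lemma T1:
  assumes K: "Kst c" and y: "y \<in> V - {s}" "E s y" "c y = (p,j)"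
    and j': "j' \<in> {1..r p}" "j' \<noteq> j"
    and w1: "w1 \<in> V - {s}" "E y w1" "c w1 = (p,j')"
    and w2: "w2 \<in> V - {s}" "E y w2" "c w2 = (p,j')"
  shows "w1 = w2"
proof (rule ccontr)
  assume ne: "w1 \<noteq> w2"
  have yD: "y \<in> D" using tokD[OF K y(1) y(2)] y(3) by auto
  have j: "j \<in> {1..r p}" using col_I[OF K y(1) y(3)] .
  have "card {s, w1, w2} \<le> card {j, j'}"
  proof (rule COUNT[OF K yD])
    show "{j, j'} \<subseteq> {1..r p}" using j j' by auto
    show "{s, w1, w2} \<subseteq> {w\<in>W. E y w}" using w1 w2 colW[OF K] sW Esym[OF y(2)] by auto
    show "\<forall>w\<in>{s, w1, w2}. w = s \<or> snd (c w) \<in> {j, j'}" using w1 w2 by auto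
    show "\<forall>j''\<in>{1..r p} - {j, j'}. \<exists>w\<in>V-{s}. E y w \<and> c w = (p,j'')"
      using T1ex[OF K y] by auto
  qed
  moreover have "card {s, w1, w2} = 3" using ne w1 w2 by auto
  moreover have "card {j, j'} \<le> 2" by (simp add: card_insert_le_m1)
  ultimately show False by simp
qed

definition nbc :: "('a \<Rightarrow> 'a \<Rightarrow> bool) \<Rightarrow> 'a list \<Rightarrow> nat \<Rightarrow> bool" where
  "nbc R P' l \<longleftrightarrow> (\<forall>w. R (P'!l) w \<longrightarrow> (0 < l \<and> w = P'!(l-1)) \<or> (Suc l < length P' \<and> w = P'!Suc l))"

lemma Kg_other:
  assumes K: "Kst c" "Kg c j j' u w" "c u = (p,j)" "j \<noteq> j'"
  shows "c w = (p,j')"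
  using assms state_prop[OF Kst_state[OF K(1)]] unfolding Kg_def by fastforce

lemma BREAK:
  assumes K: "Kst c" and j: "j \<in> {1..r p}" "j' \<in> {1..r p}" "j \<noteq> j'"
    and y: "y \<in> V - {s}" "E s y" "c y = (p,j)"
    and y': "y' \<in> V - {s}" "E s y'" "c y' = (p,j')"
    and P: "path (Kg c j j') P'" "P'!0 = y" "last P' = y'"
    and l: "0 < l" "Suc l < length P'"
    and pre: "\<forall>l'<l. nbc (Kg c j j') P' l'"
    and j'': "j'' \<in> {1..r p}" "j'' \<noteq> j" "j'' \<noteq> j'"
    and free: "\<forall>w\<in>V-{s}. E (P'!l) w \<longrightarrow> c w \<noteq> (p,j'')"
  shows False
proof -
  let ?u = "P'!l"
  have ne: "P' \<noteq> []" and dist: "distinct P'" using P(1) unfolding path_def by auto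
  have Kgu: "Kg c j j' ?u (P'!Suc l)" using P(1) l unfolding path_def by auto
  have uV: "?u \<in> V - {s}" "fst (c ?u) = p" using Kgu unfolding Kg_def by auto
  have uW: "?u \<in> W - {s}" using Wchar[OF K uV(1)] uV by auto
  let ?c = "c(?u := (p,j''))"
  have K': "Kst ?c" by (rule Kst_recol[OF K uW j''(1) free])
  have yu: "y \<noteq> ?u" using P(2) l dist ne by (metis distinct_conv_nth length_greater_0_conv less_trans zero_less_Suc neq0_conv less_not_refl3 Suc_lessD)
  have lastidx: "y' = P'!(length P' - 1)" using P(3) ne by (simp add: last_conv_nth)
  have y'u: "y' \<noteq> ?u" using lastidx l dist by (simp add: nth_eq_iff_index_eq)
  have "y' \<in> comp ?c j j' y"
    by (rule COMP[OF K' j]) (use y y' yu y'u in auto)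
  then have reach: "(Kg ?c j j')\<^sup>*\<^sup>* (P'!0) y'" by (simp add: comp_def P(2))
  have "y' \<in> set (take l P')"
  proof (rule prefix_reach[OF P(1) l(1) _ _ _ reach])
    show "l \<le> length P'" using l by auto
    show "\<forall>l'<l. \<forall>w. Kg c j j' (P'!l') w \<longrightarrow> (0 < l' \<and> w = P'!(l'-1)) \<or> (Suc l' < length P' \<and> w = P'!Suc l')"
      using pre unfolding nbc_def by blast
    show "\<forall>x z. Kg ?c j j' x z \<longrightarrow> Kg c j j' x z \<and> (l < length P' \<longrightarrow> z \<noteq> P'!l)"
    proof (intro allI impI conjI)
      fix x z assume kg: "Kg ?c j j' x z"
      then have "x \<noteq> ?u" "z \<noteq> ?u" using j'' unfolding Kg_def by auto
      then show "Kg c j j' x z" using kg unfolding Kg_def by auto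
      show "z \<noteq> P'!l" using \<open>z \<noteq> ?u\<close> .
    qed
  qed
  then obtain i where i: "i < l" "P'!i = y'" using l by (auto simp: in_set_conv_nth)
  then have "i = length P' - 1" using lastidx dist l by (simp add: nth_eq_iff_index_eq)
  then show False using i l by auto
qed

lemma PATHSTRUCT:
  assumes K: "Kst c" and j: "j \<in> {1..r p}" "j' \<in> {1..r p}" "j \<noteq> j'"
    and y: "y \<in> V - {s}" "E s y" "c y = (p,j)"
    and y': "y' \<in> V - {s}" "E s y'" "c y' = (p,j')"
    and P: "path (Kg c j j') P'" "P'!0 = y" "last P' = y'"
  shows "\<forall>l<length P'. nbc (Kg c j j') P' l"
proof (rule ccontr)
  assume "\<not> ?thesis"
  then have "\<exists>l. l < length P' \<and> \<not> nbc (Kg c j j') P' l" by auto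
  then obtain l where l0: "l < length P' \<and> \<not> nbc (Kg c j j') P' l"
    and least0: "\<forall>m<l. \<not> (m < length P' \<and> \<not> nbc (Kg c j j') P' m)"
    using exists_least_iff[of "\<lambda>l. l < length P' \<and> \<not> nbc (Kg c j j') P' l"] by blast
  have l: "l < length P'" "\<not> nbc (Kg c j j') P' l" using l0 by auto
  have least: "\<forall>l'<l. nbc (Kg c j j') P' l'" using least0 l(1) by auto
  obtain w where w: "Kg c j j' (P'!l) w" "\<not> (0 < l \<and> w = P'!(l-1))" "\<not> (Suc l < length P' \<and> w = P'!Suc l)"
    using l(2) unfolding nbc_def by blast
  have ne: "P' \<noteq> []" and dist: "distinct P'" using P(1) unfolding path_def by auto
  have lastidx: "y' = P'!(length P' - 1)" using P(3) ne by (simp add: last_conv_nth)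
  have yy': "y \<noteq> y'" using y(3) y'(3) j(3) by auto
  have len2: "2 \<le> length P'"
  proof (rule ccontr)
    assume "\<not> 2 \<le> length P'"
    moreover obtain n where "length P' = Suc n" using ne by (cases P') auto
    ultimately have "length P' = 1" by simp
    then show False using P(2) lastidx yy' by auto
  qed
  have step: "\<And>i. Suc i < length P' \<Longrightarrow> Kg c j j' (P'!i) (P'!Suc i)" using P(1) unfolding path_def by auto
  have colP: "\<And>i. i < length P' \<Longrightarrow> P'!i \<in> V - {s} \<and> c (P'!i) \<in> {(p,j),(p,j')}"
  proof -
    fix i assume "i < length P'"
    show "P'!i \<in> V - {s} \<and> c (P'!i) \<in> {(p,j),(p,j')}"
    proof (cases "Suc i < length P'")
      case True
      then show ?thesis using step[of i] unfolding Kg_def by auto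
    next
      case False
      then have "Suc (i - 1) = i" "Suc (i-1) < length P'" using len2 \<open>i < length P'\<close> by auto
      then show ?thesis using step[of "i - 1"] unfolding Kg_def by auto
    qed
  qed
  show False
  proof (cases "l = 0")
    case True
    have w1: "Kg c j j' y (P'!1)" using step[of 0] P(2) len2 by auto
    have "w \<noteq> P'!1" using w(3) True len2 by auto
    moreover have "w = P'!1"
    proof (rule T1[OF K y _ j(3)[symmetric]])
      show "j' \<in> {1..r p}" by (rule j(2))
      have kw: "Kg c j j' y w" using w(1) True P(2) by simp
      show "w \<in> V - {s}" "E y w" "c w = (p,j')" using kw Kg_other[OF K kw y(3) j(3)] unfolding Kg_def by auto
      show "P'!1 \<in> V - {s}" "E y (P'!1)" "c (P'!1) = (p,j')" using w1 Kg_other[OF K w1 y(3) j(3)] unfolding Kg_def by auto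
    qed
    ultimately show False by auto
  next
    case l0: False
    show False
    proof (cases "Suc l = length P'")
      case True
      then have ul: "P'!l = y'" using lastidx by (metis diff_Suc_1)
      have w1: "Kg c j j' y' (P'!(l-1))" using step[of "l-1"] l0 True ul Kg_sym by auto
      have "w \<noteq> P'!(l-1)" using w(2) l0 by auto
      moreover have "w = P'!(l-1)"
      proof (rule T1[OF K y' _ j(3)])
        show "j \<in> {1..r p}" by (rule j(1))
        have kw: "Kg c j' j y' w" using w(1) ul Kg_comm by metis
        show "w \<in> V - {s}" "E y' w" "c w = (p,j)" using kw Kg_other[OF K kw y'(3) j(3)[symmetric]] unfolding Kg_def by auto
        have kw1: "Kg c j' j y' (P'!(l-1))" using w1 Kg_comm by metis
        show "P'!(l-1) \<in> V - {s}" "E y' (P'!(l-1))" "c (P'!(l-1)) = (p,j)"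
          using kw1 Kg_other[OF K kw1 y'(3) j(3)[symmetric]] unfolding Kg_def by auto
      qed
      ultimately show False by auto
    next
      case False
      then have sl: "Suc l < length P'" using l by auto
      let ?u = "P'!l"
      have uc: "?u \<in> V - {s}" "c ?u \<in> {(p,j),(p,j')}" using colP l(1) by auto
      define jo where "jo = (if c ?u = (p,j) then j' else j)"
      define ju where "ju = (if c ?u = (p,j) then j else j')"
      have cu: "c ?u = (p,ju)" "ju \<noteq> jo" "{ju,jo} = {j,j'}" using uc j(3) unfolding jo_def ju_def by auto
      have oth: "\<And>z. Kg c j j' ?u z \<Longrightarrow> c z = (p,jo) \<and> z \<in> V - {s} \<and> E ?u z"
      proof -
        fix z assume kz: "Kg c j j' ?u z"
        then have kk: "c z \<in> {(p,j),(p,j')}" "z \<in> V - {s}" "E ?u z" "?u \<in> V - {s}"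
          unfolding Kg_def by auto
        then have "c z \<noteq> c ?u" using state_prop[OF Kst_state[OF K] kk(4) kk(2) kk(3)] by auto
        note kk = kk this
        then show "c z = (p,jo) \<and> z \<in> V - {s} \<and> E ?u z" using cu unfolding jo_def ju_def by auto
      qed
      have k1: "Kg c j j' ?u (P'!(l-1))" using step[of "l-1"] l0 l(1) Kg_sym by auto
      have k2: "Kg c j j' ?u (P'!Suc l)" using step[of l] sl by auto
      have dd: "P'!(l-1) \<noteq> P'!Suc l" using dist sl by (simp add: nth_eq_iff_index_eq)
      have wd: "w \<noteq> P'!(l-1)" "w \<noteq> P'!Suc l" using w(2,3) l0 sl by auto
      have uD: "?u \<in> D"
      proof -
        have "?u \<in> comp c j j' y" using path_reach[OF P(1) l(1)] P(2) unfolding comp_def by auto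
        then show ?thesis using comp_D[OF K _ tokD[OF K y(1) y(2)]] y(3) by auto
      qed
      have "\<exists>j''\<in>{1..r p} - {j,j'}. \<forall>z\<in>V-{s}. E ?u z \<longrightarrow> c z \<noteq> (p,j'')"
      proof (rule ccontr)
        assume nf: "\<not> ?thesis"
        have "card {P'!(l-1), P'!Suc l, w} \<le> card {j,j'}"
        proof (rule COUNT[OF K uD])
          show "{j,j'} \<subseteq> {1..r p}" using j by auto
          have inW: "\<And>z. Kg c j j' ?u z \<Longrightarrow> z \<in> W \<and> E ?u z"
          proof -
            fix z assume "Kg c j j' ?u z"
            then have "c z = (p,jo)" "z \<in> V - {s}" "E ?u z" using oth by auto
            then show "z \<in> W \<and> E ?u z" using colW[OF K, of z jo] by auto
          qed
          show "{P'!(l-1), P'!Suc l, w} \<subseteq> {z\<in>W. E ?u z}"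
            using inW[OF k1] inW[OF k2] inW[OF w(1)] by auto
          show "\<forall>z\<in>{P'!(l-1), P'!Suc l, w}. z = s \<or> snd (c z) \<in> {j,j'}"
            using oth[OF k1] oth[OF k2] oth[OF w(1)] cu(3) by auto
          show "\<forall>j''\<in>{1..r p} - {j,j'}. \<exists>z\<in>V-{s}. E ?u z \<and> c z = (p,j'')" using nf by auto
        qed
        moreover have "card {P'!(l-1), P'!Suc l, w} = 3" using dd wd by auto
        moreover have "card {j,j'} \<le> 2" by (simp add: card_insert_le_m1)
        ultimately show False by simp
      qed
      then obtain j'' where j0'': "j'' \<in> {1..r p} - {j,j'}" "\<forall>z\<in>V-{s}. E ?u z \<longrightarrow> c z \<noteq> (p,j'')"
        by blast
      then have j'': "j'' \<in> {1..r p}" "j'' \<noteq> j" "j'' \<noteq> j'" "\<forall>z\<in>V-{s}. E ?u z \<longrightarrow> c z \<noteq> (p,j'')"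
        by auto
      show False
        by (rule BREAK[OF K j y y' P _ sl least j''(1-3) j''(4)]) (use l0 in auto)
    qed
  qed
qed

end


context BR begin

lemma compP:
  assumes K: "Kst c" and j: "j \<in> {1..r p}" "j' \<in> {1..r p}" "j \<noteq> j'"
    and y: "y \<in> V - {s}" "E s y" "c y = (p,j)"
    and y': "y' \<in> V - {s}" "E s y'" "c y' = (p,j')"
    and P: "path (Kg c j j') P'" "P'!0 = y" "last P' = y'"
  shows "comp c j j' y \<subseteq> set P'"
proof
  fix v assume "v \<in> comp c j j' y"
  then have reach: "(Kg c j j')\<^sup>*\<^sup>* (P'!0) v" unfolding comp_def P(2) by simp
  have ne: "P' \<noteq> []" using P(1) unfolding path_def by auto
  have ps: "\<forall>l<length P'. nbc (Kg c j j') P' l" by (rule PATHSTRUCT[OF K j y y' P])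
  have "v \<in> set (take (length P') P')"
  proof (rule prefix_reach[OF P(1) _ _ _ _ reach])
    show "0 < length P'" using ne by auto
  qed (use ps in \<open>auto simp: nbc_def\<close>)
  then show "v \<in> set P'" by simp
qed

lemma get_path:
  assumes K: "Kst c" and j: "j \<in> {1..r p}" "j' \<in> {1..r p}" "j \<noteq> j'"
    and y: "y \<in> V - {s}" "E s y" "c y = (p,j)"
    and y': "y' \<in> V - {s}" "E s y'" "c y' = (p,j')"
  obtains P' where "path (Kg c j j') P'" "P'!0 = y" "last P' = y'"
proof -
  have "y' \<in> comp c j j' y" by (rule COMP[OF K j y y'])
  then have "(Kg c j j')\<^sup>*\<^sup>* y y'" unfolding comp_def by auto
  then show ?thesis using path_exists that by metis
qed

lemma inner_nbrs:
  assumes K: "Kst c" and j: "j \<in> {1..r p}" "j' \<in> {1..r p}" "j \<noteq> j'"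
    and y: "y \<in> V - {s}" "E s y" "c y = (p,j)"
    and y': "y' \<in> V - {s}" "E s y'" "c y' = (p,j')"
    and u: "u \<in> comp c j j' y" "u \<noteq> y" "c u = (p,j)"
  obtains P' l where "path (Kg c j j') P'" "P'!0 = y" "last P' = y'" "0 < l" "Suc l < length P'"
    "P'!l = u" "\<forall>l'<l. nbc (Kg c j j') P' l'"
    "P'!(l-1) \<noteq> P'!Suc l"
    "P'!(l-1) \<in> V - {s}" "E u (P'!(l-1))" "c (P'!(l-1)) = (p,j')"
    "P'!Suc l \<in> V - {s}" "E u (P'!Suc l)" "c (P'!Suc l) = (p,j')"
proof -
  obtain P' where P: "path (Kg c j j') P'" "P'!0 = y" "last P' = y'" using get_path[OF K j y y'] by blast
  have ps: "\<forall>l<length P'. nbc (Kg c j j') P' l" by (rule PATHSTRUCT[OF K j y y' P])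
  have "u \<in> set P'" using compP[OF K j y y' P] u(1) by auto
  then obtain l where l: "l < length P'" "P'!l = u" by (auto simp: in_set_conv_nth)
  have ne: "P' \<noteq> []" and dist: "distinct P'" using P(1) unfolding path_def by auto
  have l0: "0 < l" using l u(2) P(2) by (cases l) auto
  have lastidx: "y' = P'!(length P' - 1)" using P(3) ne by (simp add: last_conv_nth)
  have sl: "Suc l < length P'"
  proof (rule ccontr)
    assume "\<not> Suc l < length P'"
    then have "l = length P' - 1" using l by auto
    then have "u = y'" using l lastidx by auto
    then show False using u(3) y'(3) j(3) by auto
  qed
  have sl1: "Suc (l-1) < length P'" "Suc (l-1) = l" using l0 l(1) by auto
  have "Kg c j j' (P'!(l-1)) (P'!Suc (l-1))" using P(1) sl1(1) unfolding path_def by blast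
  then have k1: "Kg c j j' u (P'!(l-1))" using sl1(2) l(2) Kg_sym by metis
  have "Kg c j j' (P'!l) (P'!Suc l)" using P(1) sl unfolding path_def by blast
  then have k2: "Kg c j j' u (P'!Suc l)" using l(2) by simp
  have dd: "P'!(l-1) \<noteq> P'!Suc l" using dist sl by (simp add: nth_eq_iff_index_eq)
  have c1: "c (P'!(l-1)) = (p,j')" by (rule Kg_other[OF K k1 u(3) j(3)])
  have c2: "c (P'!Suc l) = (p,j')" by (rule Kg_other[OF K k2 u(3) j(3)])
  have pre: "\<forall>l'<l. nbc (Kg c j j') P' l'" using ps l(1) by auto
  have e1: "P'!(l-1) \<in> V - {s}" "E u (P'!(l-1))" using k1 unfolding Kg_def by auto
  have e2: "P'!Suc l \<in> V - {s}" "E u (P'!Suc l)" using k2 unfolding Kg_def by auto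
  show ?thesis by (rule that[OF P l0 sl l(2) pre dd e1(1) e1(2) c1 e2(1) e2(2) c2])
qed

lemma CROSS:
  assumes K: "Kst c" and j: "j \<in> {1..r p}" "j1 \<in> {1..r p}" "j2 \<in> {1..r p}" "j \<noteq> j1" "j \<noteq> j2" "j1 \<noteq> j2"
    and y: "y \<in> V - {s}" "E s y" "c y = (p,j)"
    and y1: "y1 \<in> V - {s}" "E s y1" "c y1 = (p,j1)"
    and y2: "y2 \<in> V - {s}" "E s y2" "c y2 = (p,j2)"
    and u: "u \<in> comp c j j1 y" "u \<in> comp c j j2 y" "u \<noteq> y"
  shows False
proof -
  have c1: "c u \<in> {(p,j),(p,j1)}" using comp_col[OF u(1)] y by auto
  have c2: "c u \<in> {(p,j),(p,j2)}" using comp_col[OF u(2)] y by auto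
  have cu: "c u = (p,j)" using c1 c2 j(6) by auto
  obtain P1 l1 where A1: "path (Kg c j j1) P1" "P1!0 = y" "last P1 = y1" "0 < l1" "Suc l1 < length P1"
    "P1!l1 = u" "\<forall>l'<l1. nbc (Kg c j j1) P1 l'"
    "P1!(l1-1) \<noteq> P1!Suc l1"
    "P1!(l1-1) \<in> V - {s}" "E u (P1!(l1-1))" "c (P1!(l1-1)) = (p,j1)"
    "P1!Suc l1 \<in> V - {s}" "E u (P1!Suc l1)" "c (P1!Suc l1) = (p,j1)"
    by (rule inner_nbrs[OF K j(1) j(2) j(4) y y1 u(1) u(3) cu])
  obtain P2 l2 where A2: "path (Kg c j j2) P2" "P2!0 = y" "last P2 = y2" "0 < l2" "Suc l2 < length P2"
    "P2!l2 = u" "\<forall>l'<l2. nbc (Kg c j j2) P2 l'"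
    "P2!(l2-1) \<noteq> P2!Suc l2"
    "P2!(l2-1) \<in> V - {s}" "E u (P2!(l2-1))" "c (P2!(l2-1)) = (p,j2)"
    "P2!Suc l2 \<in> V - {s}" "E u (P2!Suc l2)" "c (P2!Suc l2) = (p,j2)"
    by (rule inner_nbrs[OF K j(1) j(3) j(5) y y2 u(2) u(3) cu])
  have uD: "u \<in> D" using comp_D[OF K u(1) tokD[OF K y(1) y(2)]] y(3) by auto
  have "\<exists>j3\<in>{1..r p} - {j,j1,j2}. \<forall>z\<in>V-{s}. E u z \<longrightarrow> c z \<noteq> (p,j3)"
  proof (rule ccontr)
    assume nf: "\<not> ?thesis"
    let ?A = "{P1!(l1-1), P1!Suc l1, P2!(l2-1), P2!Suc l2}"
    have "card ?A \<le> card {j,j1,j2}"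
    proof (rule COUNT[OF K uD])
      show "{j,j1,j2} \<subseteq> {1..r p}" using j by auto
      show "?A \<subseteq> {z\<in>W. E u z}" using A1 A2 colW[OF K, of "P1!(l1-1)" j1] colW[OF K, of "P1!Suc l1" j1]
          colW[OF K, of "P2!(l2-1)" j2] colW[OF K, of "P2!Suc l2" j2] by auto
      show "\<forall>z\<in>?A. z = s \<or> snd (c z) \<in> {j,j1,j2}" using A1 A2 by auto
      show "\<forall>j''\<in>{1..r p} - {j,j1,j2}. \<exists>z\<in>V-{s}. E u z \<and> c z = (p,j'')" using nf by auto
    qed
    moreover have "card ?A = 4"
    proof -
      have "P1!(l1-1) \<noteq> P2!(l2-1)" "P1!(l1-1) \<noteq> P2!Suc l2" "P1!Suc l1 \<noteq> P2!(l2-1)" "P1!Suc l1 \<noteq> P2!Suc l2"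
        using A1(11,14) A2(11,14) j(6) by auto
      then show ?thesis using A1(8) A2(8) by auto
    qed
    moreover have "card {j,j1,j2} \<le> 3" by (simp add: card_insert_le_m1)
    ultimately show False by simp
  qed
  then obtain j3 where j30: "j3 \<in> {1..r p} - {j,j1,j2}" "\<forall>z\<in>V-{s}. E u z \<longrightarrow> c z \<noteq> (p,j3)" by blast
  show False
  proof (rule BREAK[OF K j(1) j(2) j(4) y y1 A1(1-3) A1(4,5) A1(7)])
    show "j3 \<in> {1..r p}" "j3 \<noteq> j" "j3 \<noteq> j1" using j30 by auto
    show "\<forall>w\<in>V-{s}. E (P1!l1) w \<longrightarrow> c w \<noteq> (p,j3)" using j30 A1(6) by auto
  qed
qed

lemma path_drop1:
  assumes "path R P'" "2 \<le> length P'"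
    and "\<And>i. 0 < i \<Longrightarrow> Suc i < length P' \<Longrightarrow> R' (P'!i) (P'!Suc i)"
  shows "path R' (drop 1 P')"
  using assms unfolding path_def by auto

lemma CL:
  assumes y: "y \<in> V - {s}" "E s y" "fst (c0 y) = p"
    and y': "y' \<in> V - {s}" "E s y'" "fst (c0 y') = p"
    and ne: "y \<noteq> y'"
  shows "E y y'"
proof (rule ccontr)
  assume nE: "\<not> E y y'"
  have K0: "Kst c0" by (rule Kst0)
  obtain j1 where j1: "c0 y = (p,j1)" "j1 \<in> {1..r p}" using I_fst[OF state_I[OF st0 y(1)] y(3)] by blast
  obtain j2 where j2: "c0 y' = (p,j2)" "j2 \<in> {1..r p}" using I_fst[OF state_I[OF st0 y'(1)] y'(3)] by blast
  have j12: "j1 \<noteq> j2"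
  proof
    assume "j1 = j2"
    then show False using tok_uniq[OF K0 y(1) y(2) y'(1) y'(2) j1(1)] j2(1) ne by auto
  qed
  have "\<not> {1..r p} \<subseteq> {j1,j2}"
  proof
    assume "{1..r p} \<subseteq> {j1,j2}"
    then have "card {1..r p} \<le> card {j1,j2}" by (intro card_mono) auto
    moreover have "card {j1,j2} \<le> 2" by (simp add: card_insert_le_m1)
    ultimately show False using r3 by simp
  qed
  then obtain j3 where j3: "j3 \<in> {1..r p}" "j3 \<noteq> j1" "j3 \<noteq> j2" by blast
  obtain y3 where y3: "y3 \<in> V - {s}" "E s y3" "c0 y3 = (p,j3)" using TPk[OF K0 j3(1)] by blast
  define K13 where "K13 = comp c0 j1 j3 y"
  define c' where "c' = sw c0 K13 j1 j3"
  have K13col: "K13 \<subseteq> {v\<in>V-{s}. c0 v \<in> {(p,j1),(p,j3)}}"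
  proof
    fix v assume "v \<in> K13"
    then show "v \<in> {v\<in>V-{s}. c0 v \<in> {(p,j1),(p,j3)}}" using comp_col[of v c0 j1 j3 y] y(1) j1(1) unfolding K13_def by auto
  qed
  have K13cl: "\<forall>x\<in>K13. \<forall>z. Kg c0 j1 j3 x z \<longrightarrow> z \<in> K13"
    unfolding K13_def comp_def by (auto intro: rtranclp.rtrancl_into_rtrancl)
  have K': "Kst c'" unfolding c'_def by (rule Kst_sw[OF K0 j1(2) j3(1) K13col K13cl])
  have yK: "y \<in> K13" unfolding K13_def comp_def by auto
  have y3K: "y3 \<in> K13" unfolding K13_def by (rule COMP[OF K0 j1(2) j3(1) j3(2)[symmetric] y(1,2) j1(1) y3])
  have y'K: "y' \<notin> K13" using K13col j2(1) j12 j3(3) by auto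
  have c'y: "c' y = (p,j3)" using yK j1 unfolding c'_def sw_def by auto
  have c'y3: "c' y3 = (p,j1)" using y3K y3 j3 unfolding c'_def sw_def by auto
  have c'y': "c' y' = (p,j2)" using y'K j2 unfolding c'_def sw_def by auto
  obtain P' where P: "path (Kg c0 j1 j2) P'" "P'!0 = y" "last P' = y'"
    using get_path[OF K0 j1(2) j2(2) j12 y(1,2) j1(1) y'(1,2) j2(1)] by blast
  have nP: "P' \<noteq> []" and dist: "distinct P'" using P(1) unfolding path_def by auto
  have len2: "2 \<le> length P'"
  proof (rule ccontr)
    assume "\<not> 2 \<le> length P'"
    moreover obtain n where "length P' = Suc n" using nP by (cases P') auto
    ultimately have "length P' = 1" by simp
    then have "last P' = P'!0" using nP by (simp add: last_conv_nth)
    then show False using P(2,3) ne by simp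
  qed
  have stepP: "\<And>i. Suc i < length P' \<Longrightarrow> Kg c0 j1 j2 (P'!i) (P'!Suc i)" using P(1) unfolding path_def by auto
  define t where "t = P'!1"
  have kt: "Kg c0 j1 j2 y t" using stepP[of 0] len2 P(2) unfolding t_def by auto
  have ct: "c0 t = (p,j2)" by (rule Kg_other[OF K0 kt j1(1) j12])
  have tV: "t \<in> V - {s}" "E y t" using kt unfolding Kg_def by auto
  have notK: "\<And>i. 0 < i \<Longrightarrow> i < length P' \<Longrightarrow> P'!i \<notin> K13"
  proof
    fix i assume i: "0 < i" "i < length P'" and inK: "P'!i \<in> K13"
    have a1: "P'!i \<in> comp c0 j1 j2 y" using path_reach[OF P(1) i(2)] P(2) unfolding comp_def by auto
    have a3: "P'!i \<noteq> y" using dist i P(2) nP by (metis nth_eq_iff_index_eq length_greater_0_conv less_irrefl_nat)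
    have a2: "P'!i \<in> comp c0 j1 j3 y" using inK unfolding K13_def .
    show False
      by (rule CROSS[OF K0 j1(2) j2(2) j3(1) j12 j3(2)[symmetric] j3(3)[symmetric] y(1,2) j1(1) y'(1,2) j2(1) y3 a1 a2 a3])
  qed
  have c'eq: "\<And>i. 0 < i \<Longrightarrow> i < length P' \<Longrightarrow> c' (P'!i) = c0 (P'!i)"
    using notK unfolding c'_def sw_def by auto
  have pd: "path (Kg c' j1 j2) (drop 1 P')"
  proof (rule path_drop1[OF P(1) len2])
    fix i assume i: "0 < i" "Suc i < length P'"
    then show "Kg c' j1 j2 (P'!i) (P'!Suc i)" using stepP[OF i(2)] c'eq[of i] c'eq[of "Suc i"] unfolding Kg_def by auto
  qed
  have "(Kg c' j1 j2)\<^sup>*\<^sup>* ((drop 1 P')!0) ((drop 1 P')!(length (drop 1 P') - 1))"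
    by (rule path_reach[OF pd]) (use len2 in auto)
  moreover have "(drop 1 P')!0 = t" using len2 unfolding t_def by auto
  moreover have "(drop 1 P')!(length (drop 1 P') - 1) = y'"
  proof -
    have "(drop 1 P')!(length (drop 1 P') - 1) = P'!(1 + (length P' - 2))"
      using len2 by (simp add: nth_drop numeral_2_eq_2)
    also have "1 + (length P' - 2) = length P' - 1" using len2 by simp
    also have "P'!(length P' - 1) = last P'" using nP by (simp add: last_conv_nth)
    finally show ?thesis using P(3) by simp
  qed
  ultimately have r1: "(Kg c' j1 j2)\<^sup>*\<^sup>* t y'" by simp
  have "(Kg c' j1 j2)\<^sup>*\<^sup>* y' t" by (rule rtranclp_sym[of "Kg c' j1 j2", OF Kg_sym r1])
  then have t1: "t \<in> comp c' j2 j1 y'" unfolding comp_def Kg_comm[of c' j2 j1] by simp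
  have "y \<in> comp c' j2 j3 y'"
    by (rule COMP[OF K' j2(2) j3(1) j3(3)[symmetric] y'(1,2) c'y' y(1,2) c'y])
  moreover have c't: "c' t = (p,j2)" using c'eq[of 1] len2 ct unfolding t_def by auto
  moreover have "Kg c' j2 j3 y t" using tV y(1) c'y c't unfolding Kg_def by auto
  ultimately have t2: "t \<in> comp c' j2 j3 y'" unfolding comp_def by (auto intro: rtranclp.rtrancl_into_rtrancl)
  have ty': "t \<noteq> y'" using tV nE by auto
  show False
    by (rule CROSS[OF K' j2(2) j1(2) j3(1) j12[symmetric] j3(3)[symmetric] j3(2)[symmetric]
          y'(1,2) c'y' y3(1,2) c'y3 y(1,2) c'y t1 t2 ty'])
qed

end


context PCM begin

lemma CLg:
  assumes g: "good s c" and p: "p \<in> {1..a}" and tp: "TP s c p" and r3: "3 \<le> r p"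
    and y: "y \<in> V - {s}" "E s y" "fst (c y) = p"
    and y': "y' \<in> V - {s}" "E s y'" "fst (c y') = p"
    and ne: "y \<noteq> y'"
  shows "E y y'"
proof -
  interpret BR V E a r M s c p by unfold_locales (use g p tp r3 in auto)
  show ?thesis by (rule CL[OF y y' ne])
qed

lemma good_state: "good s c \<Longrightarrow> state s c" unfolding good_def by auto

lemma StepS:
  assumes g: "good x c" and xlow: "low V E x"
    and ij: "i \<in> {1..a}" "j \<in> {1..a}" "i \<noteq> j" and r3: "3 \<le> r j"
    and w: "w \<in> V - {x}" "E x w" "fst (c w) = i" "low V E w"
    and z: "z \<in> V - {x}" "E x z" "fst (c z) = j" "low V E z"
    and wz: "E w z"
    and u: "u \<in> V - {x}" "E x u" "fst (c u) = j"
  shows "E w u"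
proof (cases "u = z")
  case True then show ?thesis using wz by simp
next
  case False
  have st: "state x c" using good_state[OF g] .
  have tpx: "\<And>q. q \<in> {1..a} \<Longrightarrow> TP x c q" using low_TP[OF st xlow] by auto
  let ?c1 = "c(x := c w)"
  have m1: "good w ?c1 \<and> TP w ?c1 i" by (rule TM[OF g ij(1) tpx[OF ij(1)] w(1) w(2) w(3)])
  have tpw: "TP w ?c1 j" using low_TP[OF good_state[OF conjunct1[OF m1]] w(4) ij(2)] .
  have zw: "z \<noteq> w" using z(3) w(3) ij(3) by auto
  let ?c2 = "?c1(w := ?c1 z)"
  have m2: "good z ?c2 \<and> TP z ?c2 j"
    by (rule TM[OF conjunct1[OF m1] ij(2) tpw]) (use z zw wz in auto)
  have uw: "u \<noteq> w" using u(3) w(3) ij(3) by auto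
  have Ezu: "E z u" by (rule CLg[OF g ij(2) tpx[OF ij(2)] r3 z(1-3) u False[symmetric]])
  show "E w u"
  proof (rule CLg[OF conjunct1[OF m2] ij(2) conjunct2[OF m2] r3])
    show "w \<in> V - {z}" "E z w" "fst (?c2 w) = j" using w zw Esym[OF wz] z(1,3) by auto
    show "u \<in> V - {z}" "E z u" "fst (?c2 u) = j" using u False Ezu uw by auto
    show "w \<noteq> u" using uw by auto
  qed
qed

end

theorem lemma3p4:
  fixes V :: "'a set" and E :: "'a \<Rightarrow> 'a \<Rightarrow> bool"
    and a :: nat and r :: "nat \<Rightarrow> nat" and x :: 'a and L :: "nat \<Rightarrow> nat \<Rightarrow> 'a set"
    and i j :: nat and w z :: 'a
  assumes G: "simple_graph V E"
    and crit: "\<exists>v. critical V E v"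
    and a: "a \<ge> 1"
    and rpos: "\<forall>k\<in>{1..a}. r k > 0"
    and rsum: "1 + (\<Sum>k=1..a. r k) = chi V E"
    and pc: "partitioned_coloring V E a r x L"
    and minimal: "\<forall>x' L'. partitioned_coloring V E a r x' L' \<longrightarrow> pc_cost E a r L \<le> pc_cost E a r L'"
    and xlow: "low V E x"
    and ij: "i \<in> {1..a}" "j \<in> {1..a}" "i \<noteq> j"
    and rij: "r i \<ge> r j" "r j \<ge> 3"
    and w: "w \<in> partU r L i \<inter> nbhd V E x" "low V E w"
    and z: "z \<in> partU r L j \<inter> nbhd V E x" "low V E z"
    and wz: "E w z"
  shows "\<forall>v\<in>(partU r L i \<union> partU r L j) \<inter> nbhd V E x. low V E v \<longrightarrow>
           (\<forall>u\<in>(partU r L i \<union> partU r L j) \<inter> nbhd V E x. u \<noteq> v \<longrightarrow> E v u)"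
proof -
  interpret PCL V E a r by unfold_locales (use G a rsum in auto)
  define c0 where "c0 = colL L"
  have st: "state x c0" unfolding c0_def by (rule pc_state[OF pc])
  interpret PCM V E a r "pc_cost E a r L"
  proof
    fix s c assume "state s c"
    then show "pc_cost E a r L \<le> cost s c"
      using minimal state_pc state_cost by metis
  qed
  have g: "good x c0" using st pc_cost_colL[OF pc] unfolding good_def c0_def by simp
  have tpx: "\<And>q. q \<in> {1..a} \<Longrightarrow> TP x c0 q" using low_TP[OF st xlow] by auto
  have Nchar: "\<And>q v. q \<in> {1..a} \<Longrightarrow> v \<in> partU r L q \<inter> nbhd V E x \<longleftrightarrow> v \<in> V - {x} \<and> E x v \<and> fst (c0 v) = q"
  proof -
    fix q v assume q: "q \<in> {1..a}"
    show "v \<in> partU r L q \<inter> nbhd V E x \<longleftrightarrow> v \<in> V - {x} \<and> E x v \<and> fst (c0 v) = q"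
      using pc_P[OF pc q] EV unfolding c0_def P_def nbhd_def by auto
  qed
  have ri: "3 \<le> r i" using rij by simp
  have rj: "3 \<le> r j" using rij by simp
  have wN: "w \<in> V - {x}" "E x w" "fst (c0 w) = i" using Nchar[OF ij(1)] w(1) by auto
  have zN: "z \<in> V - {x}" "E x z" "fst (c0 z) = j" using Nchar[OF ij(2)] z(1) by auto
  have inpart: "\<And>q u v. q \<in> {i,j} \<Longrightarrow> u \<in> V - {x} \<Longrightarrow> E x u \<Longrightarrow> fst (c0 u) = q \<Longrightarrow>
      v \<in> V - {x} \<Longrightarrow> E x v \<Longrightarrow> fst (c0 v) = q \<Longrightarrow> u \<noteq> v \<Longrightarrow> E u v"
  proof -
    fix q u v assume q: "q \<in> {i,j}" and u: "u \<in> V - {x}" "E x u" "fst (c0 u) = q"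
      and v: "v \<in> V - {x}" "E x v" "fst (c0 v) = q" and ne: "u \<noteq> v"
    have q1: "q \<in> {1..a}" "3 \<le> r q" using q ij ri rj by auto
    show "E u v" by (rule CLg[OF g q1(1) tpx[OF q1(1)] q1(2) u v ne])
  qed
  have S1: "\<And>w' z' u. w' \<in> V - {x} \<Longrightarrow> E x w' \<Longrightarrow> fst (c0 w') = i \<Longrightarrow> low V E w' \<Longrightarrow>
      z' \<in> V - {x} \<Longrightarrow> E x z' \<Longrightarrow> fst (c0 z') = j \<Longrightarrow> low V E z' \<Longrightarrow> E w' z' \<Longrightarrow>
      u \<in> V - {x} \<Longrightarrow> E x u \<Longrightarrow> fst (c0 u) = j \<Longrightarrow> E w' u"
    using StepS[OF g xlow ij(1) ij(2) ij(3) rj] by blast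
  have S2: "\<And>w' z' u. w' \<in> V - {x} \<Longrightarrow> E x w' \<Longrightarrow> fst (c0 w') = i \<Longrightarrow> low V E w' \<Longrightarrow>
      z' \<in> V - {x} \<Longrightarrow> E x z' \<Longrightarrow> fst (c0 z') = j \<Longrightarrow> low V E z' \<Longrightarrow> E w' z' \<Longrightarrow>
      u \<in> V - {x} \<Longrightarrow> E x u \<Longrightarrow> fst (c0 u) = i \<Longrightarrow> E z' u"
  proof -
    fix w' z' u assume w': "w' \<in> V - {x}" "E x w'" "fst (c0 w') = i" "low V E w'"
      and z': "z' \<in> V - {x}" "E x z'" "fst (c0 z') = j" "low V E z'" and e: "E w' z'"
      and u: "u \<in> V - {x}" "E x u" "fst (c0 u) = i"
    show "E z' u" by (rule StepS[OF g xlow ij(2) ij(1) ij(3)[symmetric] ri z' w' Esym[OF e] u])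
  qed
  show ?thesis
  proof (intro ballI impI)
    fix v u assume v: "v \<in> (partU r L i \<union> partU r L j) \<inter> nbhd V E x" and vlow: "low V E v"
      and u: "u \<in> (partU r L i \<union> partU r L j) \<inter> nbhd V E x" and ne: "u \<noteq> v"
    have vv: "v \<in> V - {x} \<and> E x v \<and> (fst (c0 v) = i \<or> fst (c0 v) = j)"
      using v Nchar[OF ij(1), of v] Nchar[OF ij(2), of v] by blast
    have uu: "u \<in> V - {x} \<and> E x u \<and> (fst (c0 u) = i \<or> fst (c0 u) = j)"
      using u Nchar[OF ij(1), of u] Nchar[OF ij(2), of u] by blast
    show "E v u"
    proof (cases "fst (c0 v) = i")
      case vi: True
      show ?thesis
      proof (cases "fst (c0 u) = i")
        case True
        then show ?thesis using inpart[of i v u] vv uu vi ne by auto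
      next
        case False
        then have uj: "fst (c0 u) = j" using uu by auto
        have Ezv: "E z v"
        proof (cases "v = w")
          case True then show ?thesis using Esym[OF wz] by simp
        next
          case False
          show ?thesis using S2[OF wN w(2) zN z(2) wz, of v] vv vi by auto
        qed
        show ?thesis using S1[of v z u] vv vi vlow zN z(2) Esym[OF Ezv] uu uj by auto
      qed
    next
      case vj: False
      then have vj: "fst (c0 v) = j" using vv by auto
      show ?thesis
      proof (cases "fst (c0 u) = j")
        case True
        then show ?thesis using inpart[of j v u] vv uu vj ne by auto
      next
        case False
        then have ui: "fst (c0 u) = i" using uu by auto
        have Ewv: "E w v"
        proof (cases "v = z")
          case True then show ?thesis using wz by simp
        next
          case False
          show ?thesis using S1[OF wN w(2) zN z(2) wz, of v] vv vj by auto
        qed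
        show ?thesis using S2[of w v u] wN w(2) vv vj vlow Ewv uu ui by auto
      qed
    qed
  qed
qed


end
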